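(* Assume $\beta>1$ and $0<\omega_i^{\min}\le\omega_i^k\le\omega_i^{\max}<\infty$ ($i\le N-1$), $0<\nu_i^{\min}\le\nu_i^k\le\nu_i^{\max}<\infty$ ($i\le N-2$) for all $k\ge0$. Then there exists $C_2>0$ such that the iterates $X^k$ of the 2-splitting proximal point ADMM satisfy the relative error condition $$\|\nabla\mathcal{L}_\beta^{2s}(X^k)\|_F\le C_2\|X^k-X^{k-1}\|_F\quad\text{for all }k\ge1,$$ where $\nabla$ is the gradient with respect to all blocks $(\{W_i\},\{V_i\},\Lambda)$.
   Context: Data $X\in\mathbb{R}^{d\times n}$, $Y\in\mathbb{R}^{q\times n}$, integer $N\ge3$, parameters $\lambda,\mu>0$, $\beta>0$. Activations $\sigma_i:\mathbb{R}\to\mathbb{R}$ ($i\le N-1$) real analytic with $|\sigma_i|\le\psi_0,|\sigma_i'|\le\psi_1,|\sigma_i''|\le\psi_2$ on $\mathbb{R}$, applied entrywise to matrices. $\|\cdot\|_F$ Frobenius norm, $\langle A,B\rangle=\mathrm{tr}(AB^T)$. $V_0:=X$ always. Variables $W_i\in\mathbb{R}^{d\times d}$ ($i\le N-1$), $W_N\in\mathbb{R}^{q\times d}$, $V_i\in\mathbb{R}^{d\times n}$ ($1\le i\le N-1$), $V_N,\Lambda\in\mathbb{R}^{q\times n}$. Augmented Lagrangian: $\mathcal{L}_\beta^{2s}(\{W_i\},\{V_i\},\Lambda)=\tfrac12\|V_N-Y\|_F^2+\tfrac\lambda2\sum_{i=1}^N\|W_i\|_F^2+\tfrac\mu2\sum_{i=1}^{N-1}\|V_{i-1}+\sigma_i(W_iV_{i-1})-V_i\|_F^2+\langle\Lambda,W_NV_{N-1}-V_N\rangle+\tfrac\beta2\|W_NV_{N-1}-V_N\|_F^2$.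 2-splitting proximal point ADMM: given arbitrary $W_i^0$, set $V_i^0=V_{i-1}^0+\sigma_i(W_i^0V_{i-1}^0)$ ($i\le N-1$), $V_N^0=W_N^0V_{N-1}^0$, $\Lambda^0=O$, and positive parameters $\omega_i^{k}$ ($i\le N-1$), $\nu_i^{k}$ ($i\le N-2$). For $k\ge1$: (a) $W_N^k=\arg\min_{W_N}\{\tfrac\lambda2\|W_N\|_F^2+\tfrac\beta2\|W_NV_{N-1}^{k-1}-V_N^{k-1}+\Lambda^{k-1}/\beta\|_F^2\}$; (b) for $i=N-1,\dots,1$: $W_i^k$ is a (fixed) minimizer of $\tfrac\lambda2\|W_i\|_F^2+\tfrac\mu2\|V_{i-1}^{k-1}+\sigma_i(W_iV_{i-1}^{k-1})-V_i^{k-1}\|_F^2+\tfrac{\omega_i^{k-1}}2\|W_i-W_i^{k-1}\|_F^2$; (c) for $i=1,\dots,N-2$: $V_i^k$ is a (fixed) minimizer of $\tfrac\mu2\|V_{i-1}^k+\sigma_i(W_i^kV_{i-1}^k)-V_i\|_F^2+\tfrac\mu2\|V_i+\sigma_{i+1}(W_{i+1}^kV_i)-V_{i+1}^{k-1}\|_F^2+\tfrac{\nu_i^{k-1}}2\|V_i-V_i^{k-1}\|_F^2$; (d) $V_{N-1}^k=\arg\min\{\tfrac\mu2\|V_{N-2}^k+\sigma_{N-1}(W_{N-1}^kV_{N-2}^k)-V_{N-1}\|_F^2+\tfrac\beta2\|W_N^kV_{N-1}-V_N^{k-1}+\Lambda^{k-1}/\beta\|_F^2\}$; (e) $V_N^k=\frac{1}{1+\beta}(Y+\beta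 W_N^kV_{N-1}^k+\Lambda^{k-1})$; (f) $\Lambda^k=\Lambda^{k-1}+\beta(W_N^kV_{N-1}^k-V_N^k)$. $X^k:=(\{W_i^k\}_{i=1}^N,\{V_i^k\}_{i=1}^N,\Lambda^k)$ and $\|X^k-X^{k-1}\|_F^2:=\sum_i\|W_i^k-W_i^{k-1}\|_F^2+\sum_i\|V_i^k-V_i^{k-1}\|_F^2+\|\Lambda^k-\Lambda^{k-1}\|_F^2$. *)

theory Defs
  imports "HOL-Analysis.Analysis"
begin

text \<open>Matrices with r rows and c columns are elements of real^'c^'r.
  The norm on this type is the Frobenius norm, the inner product is tr(A B^T),
  and ** is matrix multiplication.\<close>

definition real_analytic :: "(real \<Rightarrow> real) \<Rightarrow> bool" where
  "real_analytic f \<longleftrightarrow>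
     (\<forall>x. \<exists>r>0. \<exists>a::nat \<Rightarrow> real. \<forall>y. \<bar>y - x\<bar> < r \<longrightarrow> (\<lambda>n. a n * (y - x) ^ n) sums f y)"

definition ew :: "(real \<Rightarrow> real) \<Rightarrow> real^'c^'r \<Rightarrow> real^'c^'r" where
  "ew f A = (\<chi> i j. f (A $ i $ j))"

definition Vx :: "real^'n^'d \<Rightarrow> (nat \<Rightarrow> real^'n^'d) \<Rightarrow> nat \<Rightarrow> real^'n^'d" where
  "Vx X V i = (if i = 0 then X else V i)"

text \<open>Augmented Lagrangian L_beta^{2s}.  W i (1 \<le> i \<le> N-1), WN = W_N,
  V i (1 \<le> i \<le> N-1), VN = V_N, Lam = Lambda.\<close>
definition lagr ::
  "real^'n^'d \<Rightarrow> real^'n^'q \<Rightarrow> nat \<Rightarrow> real \<Rightarrow> real \<Rightarrow> real \<Rightarrow> (nat \<Rightarrow> real \<Rightarrow> real) \<Rightarrow>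
   (nat \<Rightarrow> real^'d^'d) \<Rightarrow> real^'d^'q \<Rightarrow> (nat \<Rightarrow> real^'n^'d) \<Rightarrow> real^'n^'q \<Rightarrow> real^'n^'q \<Rightarrow> real" where
  "lagr X Y N lam mu beta sig W WN V VN Lam =
     (1/2) * (norm (VN - Y))\<^sup>2
     + lam / 2 * ((\<Sum>i=1..N-1. (norm (W i))\<^sup>2) + (norm WN)\<^sup>2)
     + mu / 2 * (\<Sum>i=1..N-1. (norm (Vx X V (i-1) + ew (sig i) (W i ** Vx X V (i-1)) - V i))\<^sup>2)
     + inner Lam (WN ** V (N-1) - VN)
     + beta / 2 * (norm (WN ** V (N-1) - VN))\<^sup>2"

definition grad_of :: "('a::real_inner \<Rightarrow> real) \<Rightarrow> 'a \<Rightarrow> 'a" where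
  "grad_of f x = (SOME D. GDERIV f x :> D)"

text \<open>Frobenius norm of the full gradient of L w.r.t. all blocks, written out
  blockwise (the full gradient is the tuple of the block-partial gradients).\<close>
definition lagr_grad_norm ::
  "real^'n^'d \<Rightarrow> real^'n^'q \<Rightarrow> nat \<Rightarrow> real \<Rightarrow> real \<Rightarrow> real \<Rightarrow> (nat \<Rightarrow> real \<Rightarrow> real) \<Rightarrow>
   (nat \<Rightarrow> real^'d^'d) \<Rightarrow> real^'d^'q \<Rightarrow> (nat \<Rightarrow> real^'n^'d) \<Rightarrow> real^'n^'q \<Rightarrow> real^'n^'q \<Rightarrow> real" where
  "lagr_grad_norm X Y N lam mu beta sig W WN V VN Lam = sqrt (
       (\<Sum>i=1..N-1. (norm (grad_of (\<lambda>Z. lagr X Y N lam mu beta sig (W(i := Z)) WN V VN Lam) (W i)))\<^sup>2)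
     + (norm (grad_of (\<lambda>Z. lagr X Y N lam mu beta sig W Z V VN Lam) WN))\<^sup>2
     + (\<Sum>i=1..N-1. (norm (grad_of (\<lambda>Z. lagr X Y N lam mu beta sig W WN (V(i := Z)) VN Lam) (V i)))\<^sup>2)
     + (norm (grad_of (\<lambda>Z. lagr X Y N lam mu beta sig W WN V Z Lam) VN))\<^sup>2
     + (norm (grad_of (\<lambda>Z. lagr X Y N lam mu beta sig W WN V VN Z) Lam))\<^sup>2)"

text \<open>The sequences (indexed by k first, then block index i) are iterates of the
  2-splitting proximal point ADMM with proximal parameters om i k, nu i k.\<close>
definition admm2s_iterates ::
  "real^'n^'d \<Rightarrow> real^'n^'q \<Rightarrow> nat \<Rightarrow> real \<Rightarrow> real \<Rightarrow> real \<Rightarrow> (nat \<Rightarrow> real \<Rightarrow> real) \<Rightarrow>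
   (nat \<Rightarrow> nat \<Rightarrow> real) \<Rightarrow> (nat \<Rightarrow> nat \<Rightarrow> real) \<Rightarrow>
   (nat \<Rightarrow> nat \<Rightarrow> real^'d^'d) \<Rightarrow> (nat \<Rightarrow> real^'d^'q) \<Rightarrow> (nat \<Rightarrow> nat \<Rightarrow> real^'n^'d) \<Rightarrow>
   (nat \<Rightarrow> real^'n^'q) \<Rightarrow> (nat \<Rightarrow> real^'n^'q) \<Rightarrow> bool" where
  "admm2s_iterates X Y N lam mu beta sig om nu W WN V VN Lam \<longleftrightarrow>
     \<comment> \<open>initialization\<close>
     (\<forall>i\<in>{1..N-1}. V 0 i = Vx X (V 0) (i-1) + ew (sig i) (W 0 i ** Vx X (V 0) (i-1)))
   \<and> VN 0 = WN 0 ** V 0 (N-1)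
   \<and> Lam 0 = 0
   \<and> (\<forall>k\<ge>1.
     \<comment> \<open>(a)\<close>
       (\<forall>Z. lam/2 * (norm (WN k))\<^sup>2 + beta/2 * (norm (WN k ** V (k-1) (N-1) - VN (k-1) + (1/beta) *\<^sub>R Lam (k-1)))\<^sup>2
          \<le> lam/2 * (norm Z)\<^sup>2 + beta/2 * (norm (Z ** V (k-1) (N-1) - VN (k-1) + (1/beta) *\<^sub>R Lam (k-1)))\<^sup>2)
     \<comment> \<open>(b)\<close>
     \<and> (\<forall>i\<in>{1..N-1}. \<forall>Z.
          lam/2 * (norm (W k i))\<^sup>2
          + mu/2 * (norm (Vx X (V (k-1)) (i-1) + ew (sig i) (W k i ** Vx X (V (k-1)) (i-1)) - V (k-1) i))\<^sup>2
          + om i (k-1) / 2 * (norm (W k i - W (k-1) i))\<^sup>2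
        \<le> lam/2 * (norm Z)\<^sup>2
          + mu/2 * (norm (Vx X (V (k-1)) (i-1) + ew (sig i) (Z ** Vx X (V (k-1)) (i-1)) - V (k-1) i))\<^sup>2
          + om i (k-1) / 2 * (norm (Z - W (k-1) i))\<^sup>2)
     \<comment> \<open>(c)\<close>
     \<and> (\<forall>i\<in>{1..N-2}. \<forall>Z.
          mu/2 * (norm (Vx X (V k) (i-1) + ew (sig i) (W k i ** Vx X (V k) (i-1)) - V k i))\<^sup>2
          + mu/2 * (norm (V k i + ew (sig (i+1)) (W k (i+1) ** V k i) - V (k-1) (i+1)))\<^sup>2
          + nu i (k-1) / 2 * (norm (V k i - V (k-1) i))\<^sup>2
        \<le> mu/2 * (norm (Vx X (V k) (i-1) + ew (sig i) (W k i ** Vx X (V k) (i-1)) - Z))\<^sup>2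
          + mu/2 * (norm (Z + ew (sig (i+1)) (W k (i+1) ** Z) - V (k-1) (i+1)))\<^sup>2
          + nu i (k-1) / 2 * (norm (Z - V (k-1) i))\<^sup>2)
     \<comment> \<open>(d)\<close>
     \<and> (\<forall>Z.
          mu/2 * (norm (Vx X (V k) (N-2) + ew (sig (N-1)) (W k (N-1) ** Vx X (V k) (N-2)) - V k (N-1)))\<^sup>2
          + beta/2 * (norm (WN k ** V k (N-1) - VN (k-1) + (1/beta) *\<^sub>R Lam (k-1)))\<^sup>2
        \<le> mu/2 * (norm (Vx X (V k) (N-2) + ew (sig (N-1)) (W k (N-1) ** Vx X (V k) (N-2)) - Z))\<^sup>2
          + beta/2 * (norm (WN k ** Z - VN (k-1) + (1/beta) *\<^sub>R Lam (k-1)))\<^sup>2)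
     \<comment> \<open>(e)\<close>
     \<and> VN k = (1/(1+beta)) *\<^sub>R (Y + beta *\<^sub>R (WN k ** V k (N-1)) + Lam (k-1))
     \<comment> \<open>(f)\<close>
     \<and> Lam k = Lam (k-1) + beta *\<^sub>R (WN k ** V k (N-1) - VN k))"

definition iter_diff_norm ::
  "nat \<Rightarrow> (nat \<Rightarrow> nat \<Rightarrow> real^'d^'d) \<Rightarrow> (nat \<Rightarrow> real^'d^'q) \<Rightarrow> (nat \<Rightarrow> nat \<Rightarrow> real^'n^'d) \<Rightarrow>
   (nat \<Rightarrow> real^'n^'q) \<Rightarrow> (nat \<Rightarrow> real^'n^'q) \<Rightarrow> nat \<Rightarrow> real" where
  "iter_diff_norm N W WN V VN Lam k = sqrt (
       (\<Sum>i=1..N-1. (norm (W k i - W (k-1) i))\<^sup>2) + (norm (WN k - WN (k-1)))\<^sup>2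
     + (\<Sum>i=1..N-1. (norm (V k i - V (k-1) i))\<^sup>2) + (norm (VN k - VN (k-1)))\<^sup>2
     + (norm (Lam k - Lam (k-1)))\<^sup>2)"

end

theory Submission
  imports Defs
begin


lemma norm2_entries:
  fixes A :: "real^'c^'r"
  shows "(norm A)\<^sup>2 = (\<Sum>i\<in>UNIV. \<Sum>j\<in>UNIV. (A$i$j)\<^sup>2)"
  unfolding power2_norm_eq_inner by (simp add: inner_vec_def power2_eq_square)

lemma entry_le_norm:
  fixes A :: "real^'c^'r"
  shows "\<bar>A$i$j\<bar> \<le> norm A"
  by (rule order_trans[OF component_le_norm_cart Finite_Cartesian_Product.norm_nth_le])

lemma norm_mult_le:
  fixes A :: "real^'k^'r" and B :: "real^'c^'k"
  shows "norm (A ** B) \<le> norm A * norm B"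
proof -
  have "(norm (A ** B))\<^sup>2 = (\<Sum>i\<in>UNIV. \<Sum>j\<in>UNIV. (\<Sum>k\<in>UNIV. A$i$k * B$k$j)\<^sup>2)"
    by (simp add: norm2_entries matrix_matrix_mult_def)
  also have "\<dots> \<le> (\<Sum>i\<in>UNIV. \<Sum>j\<in>UNIV. (\<Sum>k\<in>UNIV. (A$i$k)\<^sup>2) * (\<Sum>k\<in>UNIV. (B$k$j)\<^sup>2))"
    by (intro sum_mono Cauchy_Schwarz_ineq_sum)
  also have "\<dots> = (\<Sum>i\<in>UNIV. \<Sum>k\<in>UNIV. (A$i$k)\<^sup>2) * (\<Sum>j\<in>UNIV. \<Sum>k\<in>UNIV. (B$k$j)\<^sup>2)"
    by (rule sum_product[symmetric])
  also have "\<dots> = (norm A)\<^sup>2 * (norm B)\<^sup>2"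
    by (simp only: norm2_entries sum.swap[of "\<lambda>j k. (B$k$j)\<^sup>2" UNIV UNIV])
  finally have "(norm (A ** B))\<^sup>2 \<le> (norm A * norm B)\<^sup>2" by (simp add: power_mult_distrib)
  then show ?thesis by (rule power2_le_imp_le) simp
qed

lemma norm_had_le:
  fixes H :: "real^'c^'r"
  assumes "\<And>i j. \<bar>c i j\<bar> \<le> M"
  shows "norm (\<chi> i j. c i j * H$i$j) \<le> M * norm H"
proof -
  have M: "M \<ge> 0" using assms[of undefined undefined] by simp
  have "(norm (\<chi> i j. c i j * H$i$j))\<^sup>2 = (\<Sum>i\<in>UNIV. \<Sum>j\<in>UNIV. (c i j)\<^sup>2 * (H$i$j)\<^sup>2)"
    unfolding norm2_entries by (simp only: vec_lambda_beta power_mult_distrib)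
  also have "\<dots> \<le> (\<Sum>i\<in>UNIV. \<Sum>j\<in>UNIV. M\<^sup>2 * (H$i$j)\<^sup>2)"
  proof (intro sum_mono mult_right_mono)
    fix i j
    have "\<bar>c i j\<bar> \<le> \<bar>M\<bar>" using assms[of i j] by linarith
    then show "(c i j)\<^sup>2 \<le> M\<^sup>2" by (simp add: abs_le_square_iff)
  qed simp
  also have "\<dots> = (M * norm H)\<^sup>2"
    unfolding norm2_entries power_mult_distrib by (simp only: sum_distrib_left)
  finally show ?thesis by (rule power2_le_imp_le) (use M in simp)
qed

lemma ew_eq_sum:
  fixes g :: "'r::finite \<Rightarrow> 'c::finite \<Rightarrow> real"
  shows "(\<chi> i j. g i j) = (\<Sum>i\<in>UNIV. \<Sum>j\<in>UNIV. g i j *\<^sub>R axis i (axis j 1))"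
proof -
  have ax: "(axis i (axis j (1::real)) :: real^'c^'r) $ a $ b = (if a = i \<and> b = j then 1 else 0)" for i a :: 'r and j b :: 'c
    unfolding axis_def by (cases "a = i"; cases "b = j") (simp_all only: vec_lambda_beta zero_index if_True if_False simp_thms)
  have in1: "(\<Sum>y\<in>UNIV. if a = x \<and> b = y then g x y else 0) = (if a = x then g x b else 0)" for x a :: 'r and b :: 'c
    by (cases "x = a") simp_all
  have E: "(\<Sum>i\<in>UNIV. \<Sum>j\<in>UNIV. g i j *\<^sub>R axis i (axis j 1)) $ a $ b = g a b" for a b
  proof -
    have "(\<Sum>i\<in>UNIV. \<Sum>j\<in>UNIV. g i j *\<^sub>R axis i (axis j (1::real))) $ a $ b
        = (\<Sum>i\<in>UNIV. \<Sum>j\<in>UNIV. g i j * (axis i (axis j (1::real)) $ a $ b))"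
      by (simp only: sum_component vector_scaleR_component real_scaleR_def)
    also have "\<dots> = (\<Sum>i\<in>UNIV. \<Sum>j\<in>UNIV. if a = i \<and> b = j then g i j else 0)"
      by (simp only: ax mult_1_right mult_zero_right if_distrib[of "\<lambda>x. g _ _ * x"])
    also have "\<dots> = g a b" by (simp only: in1) simp
    finally show ?thesis .
  qed
  show ?thesis
    by (rule vec_eq_iff[THEN iffD2], rule allI, rule vec_eq_iff[THEN iffD2], rule allI) (simp only: vec_lambda_beta E)
qed



definition dew :: "(real \<Rightarrow> real) \<Rightarrow> real^'c^'r \<Rightarrow> real^'c^'r \<Rightarrow> real^'c^'r" where
  "dew f A H = (\<chi> i j. deriv f (A$i$j) * H$i$j)"

lemma ew_has_derivative:
  fixes A :: "real^'c^'r"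
  assumes "\<And>x. (f has_real_derivative deriv f x) (at x)"
  shows "(ew f has_derivative dew f A) (at A)"
proof -
  have e1: "ew f = (\<lambda>B::real^'c^'r. \<Sum>i\<in>UNIV. \<Sum>j\<in>UNIV. f (B$i$j) *\<^sub>R axis i (axis j 1))"
    by (rule ext) (simp only: ew_def ew_eq_sum)
  have e2: "dew f A = (\<lambda>H::real^'c^'r. \<Sum>i\<in>UNIV. \<Sum>j\<in>UNIV. (deriv f (A$i$j) * H$i$j) *\<^sub>R axis i (axis j 1))"
    unfolding dew_def by (rule ext) (rule ew_eq_sum)
  have c: "((\<lambda>B::real^'c^'r. f (B$i$j)) has_derivative (\<lambda>H. deriv f (A$i$j) * H$i$j)) (at A)" for i j
  proof -
    have bl: "bounded_linear (\<lambda>B::real^'c^'r. B$i$j)"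
      using bounded_linear_compose[OF bounded_linear_vec_nth[of j] bounded_linear_vec_nth[of i]] by simp
    have 1: "((\<lambda>B::real^'c^'r. B$i$j) has_derivative (\<lambda>H. H$i$j)) (at A)"
      by (rule bounded_linear_imp_has_derivative[OF bl])
    have 2: "(f has_derivative (\<lambda>h. h * deriv f (A$i$j))) (at (A$i$j))"
      using assms[of "A$i$j"] by (simp add: has_field_derivative_def mult_commute_abs)
    show ?thesis using has_derivative_compose[OF 1 2] by (simp add: mult.commute)
  qed
  show ?thesis
    unfolding e1 e2
    by (intro has_derivative_sum bounded_linear.has_derivative[OF bounded_linear_scaleR_left] c)
qed


lemma sq_has_derivative:
  fixes g :: "'a::real_normed_vector \<Rightarrow> 'b::real_inner"
  assumes "(g has_derivative g') (at x)"
  shows "((\<lambda>z. (norm (g z))\<^sup>2) has_derivative (\<lambda>h. 2 * inner (g x) (g' h))) (at x)"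
proof -
  have "((\<lambda>z. inner (g z) (g z)) has_derivative (\<lambda>h. inner (g x) (g' h) + inner (g' h) (g x))) (at x)"
    by (rule has_derivative_inner[OF assms assms])
  then show ?thesis
    by (simp add: power2_norm_eq_inner inner_commute)
qed

lemma grad_bound:
  fixes f :: "'a::euclidean_space \<Rightarrow> real"
  assumes d: "(f has_derivative f') (at x)" and C: "C \<ge> 0"
    and b: "\<And>h. \<bar>f' h\<bar> \<le> C * norm h"
  shows "norm (grad_of f x) \<le> C"
proof -
  have bl: "bounded_linear f'" using d by (rule has_derivative_bounded_linear)
  then have lin: "linear f'" by (rule bounded_linear.linear)
  define D where "D = (\<Sum>b\<in>Basis. f' b *\<^sub>R b)"
  have rep: "f' h = inner h D" for h
  proof -
    have "f' h = f' (\<Sum>b\<in>Basis. inner h b *\<^sub>R b)" by (simp add: euclidean_representation)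
    also have "\<dots> = (\<Sum>b\<in>Basis. inner h b * f' b)"
      by (simp add: linear_sum[OF lin] linear_scale[OF lin])
    also have "\<dots> = inner h D" unfolding D_def inner_sum_right
      by (intro sum.cong refl) (simp add: mult.commute)
    finally show ?thesis .
  qed
  have "GDERIV f x :> D" unfolding gderiv_def using d rep by (metis (no_types) ext)
  then have "GDERIV f x :> grad_of f x" unfolding grad_of_def by (rule someI)
  then have "(f has_derivative (\<lambda>h. inner h (grad_of f x))) (at x)" by (simp add: gderiv_def)
  then have eq: "f' = (\<lambda>h. inner h (grad_of f x))" using d has_derivative_unique by blast
  let ?G = "grad_of f x"
  have "(norm ?G)\<^sup>2 \<le> C * norm ?G"
    using b[of ?G] by (simp add: eq power2_norm_eq_inner)
  then show ?thesis
    by (cases "norm ?G = 0") (use C in \<open>auto simp: power2_eq_square\<close>)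
qed

lemma min_deriv_zero:
  fixes f :: "'a::real_normed_vector \<Rightarrow> real"
  assumes "(f has_derivative f') (at x)" and "\<And>z. f x \<le> f z"
  shows "f' h = 0"
  using differential_zero_maxmin[of x UNIV f f'] assms by auto

lemma lipschitz_deriv:
  assumes "\<And>y. (h has_real_derivative h' y) (at y)" and "\<And>y. \<bar>h' y\<bar> \<le> M"
  shows "\<bar>h a - h b\<bar> \<le> M * \<bar>a - b\<bar>"
proof -
  have *: "\<bar>h v - h u\<bar> \<le> M * \<bar>v - u\<bar>" if "u < v" for u v
  proof -
    have "\<exists>z. u < z \<and> z < v \<and> h v - h u = (v - u) * h' z"
      by (rule MVT2[OF that]) (rule assms)
    then obtain z where "h v - h u = (v - u) * h' z" by blast
    then have "\<bar>h v - h u\<bar> = \<bar>v - u\<bar> * \<bar>h' z\<bar>" by (simp add: abs_mult)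
    also have "\<dots> \<le> \<bar>v - u\<bar> * M" by (intro mult_left_mono assms) simp
    finally show ?thesis by (simp add: mult.commute)
  qed
  show ?thesis
    using *[of a b] *[of b a] by (cases a b rule: linorder_cases) (auto simp: abs_minus_commute)
qed


lemma analytic_derivs:
  assumes "real_analytic f"
  shows "(f has_real_derivative deriv f x) (at x)"
    and "(deriv f has_real_derivative deriv (deriv f) x) (at x)"
proof -
  obtain r a where r: "r > 0" and s: "\<And>y. \<bar>y - x\<bar> < r \<Longrightarrow> (\<lambda>n. a n * (y - x) ^ n) sums f y"
    using assms unfolding real_analytic_def by blast
  define g where "g t = (\<Sum>n. a n * t ^ n)" for t :: real
  have sm: "summable (\<lambda>n. a n * t ^ n)" if "norm t < r" for t :: real
    using s[of "x + t"] that by (auto simp: sums_iff)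
  have gf: "g (y - x) = f y" if "\<bar>y - x\<bar> < r" for y
    using s[OF that] unfolding g_def by (simp add: sums_iff)
  define g1 where "g1 t = (\<Sum>n. diffs a n * t ^ n)" for t :: real
  define g2 where "g2 t = (\<Sum>n. diffs (diffs a) n * t ^ n)" for t :: real
  have dg: "(g has_real_derivative g1 t) (at t)" if "norm t < r" for t
    unfolding g_def g1_def by (rule termdiffs_strong'[OF sm that]) 
  have sm1: "summable (\<lambda>n. diffs a n * t ^ n)" if "norm t < r" for t :: real
    by (rule termdiff_converges[OF that sm])
  have dg1: "(g1 has_real_derivative g2 t) (at t)" if "norm t < r" for t
    unfolding g1_def g2_def by (rule termdiffs_strong'[OF sm1 that])
  have S: "open (ball x r)" by simp
  have df: "(f has_real_derivative g1 (y - x)) (at y)" if "y \<in> ball x r" for y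
  proof -
    have yr: "norm (y - x) < r" using that by (simp add: dist_norm abs_minus_commute)
    have "(g has_real_derivative g1 (y - x)) (at (y + - x))" using dg[OF yr] by simp
    then have "((\<lambda>t. g (t + - x)) has_real_derivative g1 (y - x)) (at y)" by (simp only: DERIV_shift)
    then have "((\<lambda>y. g (y - x)) has_real_derivative g1 (y - x)) (at y)" by simp
    then show ?thesis
      by (rule has_field_derivative_transform_within_open[OF _ S that])
         (use gf in \<open>auto simp: dist_norm abs_minus_commute\<close>)
  qed
  have x: "x \<in> ball x r" using r by simp
  show "(f has_real_derivative deriv f x) (at x)"
    using df[OF x] DERIV_imp_deriv[OF df[OF x]] by simp
  have dfe: "deriv f y = g1 (y - x)" if "y \<in> ball x r" for y
    using df[OF that] by (rule DERIV_imp_deriv)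
  have "(g1 has_real_derivative g2 0) (at (x + - x))" using dg1[of 0] r by simp
  then have "((\<lambda>t. g1 (t + - x)) has_real_derivative g2 0) (at x)" by (simp only: DERIV_shift)
  then have "((\<lambda>y. g1 (y - x)) has_real_derivative g2 0) (at x)" by simp
  then have D2: "(deriv f has_real_derivative g2 0) (at x)"
    by (rule has_field_derivative_transform_within_open[OF _ S x]) (use dfe in auto)
  show "(deriv f has_real_derivative deriv (deriv f) x) (at x)"
    using D2 DERIV_imp_deriv[OF D2] by simp
qed



lemma matrix_add_rdistrib':
  fixes B C :: "real^'k^'r" and A :: "real^'p^'k"
  shows "(B + C) ** A = B ** A + C ** A"
  by (simp add: matrix_matrix_mult_def vec_eq_iff sum.distrib distrib_right)

lemma bl_mult_right: "bounded_linear (\<lambda>Z::real^'k^'r. Z ** (A::real^'c^'k))"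
  unfolding linear_conv_bounded_linear[symmetric]
  by (rule linearI) (simp_all add: matrix_add_rdistrib' scalar_matrix_assoc)

lemma bl_mult_left: "bounded_linear (\<lambda>Z::real^'c^'k. (M::real^'k^'r) ** Z)"
  unfolding linear_conv_bounded_linear[symmetric]
  by (rule linearI) (simp_all add: matrix_add_ldistrib matrix_scalar_ac scalar_matrix_assoc)

lemma matrix_diff_rdistrib:
  fixes B C :: "real^'k^'r" and A :: "real^'p^'k"
  shows "(B - C) ** A = B ** A - C ** A"
  by (rule linear_diff[OF bounded_linear.linear[OF bl_mult_right[of A]]])

lemma matrix_diff_ldistrib:
  fixes B C :: "real^'p^'k" and A :: "real^'k^'r"
  shows "A ** (B - C) = A ** B - A ** C"
  by (rule linear_diff[OF bounded_linear.linear[OF bl_mult_left[of A]]])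

lemma resW_deriv:
  fixes A :: "real^'c^'k" and B :: "real^'c^'k"
  assumes "\<And>x. (s has_real_derivative deriv s x) (at x)"
  shows "((\<lambda>Z::real^'k^'k. A + ew s (Z ** A) - B) has_derivative (\<lambda>v. dew s (Z0 ** A) (v ** A))) (at Z0)"
proof -
  have 1: "((\<lambda>Z::real^'k^'k. Z ** A) has_derivative (\<lambda>v. v ** A)) (at Z0)"
    by (rule bounded_linear_imp_has_derivative[OF bl_mult_right])
  have 2: "((\<lambda>Z. ew s (Z ** A)) has_derivative (\<lambda>v. dew s (Z0 ** A) (v ** A))) (at Z0)"
    using has_derivative_compose[OF 1 ew_has_derivative[OF assms]] .
  show ?thesis
    by (rule has_derivative_eq_rhs[OF has_derivative_diff[OF has_derivative_add[OF has_derivative_const 2] has_derivative_const]]) simp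
qed

lemma resV_deriv:
  fixes M :: "real^'k^'k" and B :: "real^'c^'k"
  assumes "\<And>x. (s has_real_derivative deriv s x) (at x)"
  shows "((\<lambda>Z::real^'c^'k. Z + ew s (M ** Z) - B) has_derivative (\<lambda>v. v + dew s (M ** Z0) (M ** v))) (at Z0)"
proof -
  have 1: "((\<lambda>Z::real^'c^'k. M ** Z) has_derivative (\<lambda>v. M ** v)) (at Z0)"
    by (rule bounded_linear_imp_has_derivative[OF bl_mult_left])
  have 2: "((\<lambda>Z. ew s (M ** Z)) has_derivative (\<lambda>v. dew s (M ** Z0) (M ** v))) (at Z0)"
    using has_derivative_compose[OF 1 ew_has_derivative[OF assms]] .
  show ?thesis
    by (rule has_derivative_eq_rhs[OF has_derivative_diff[OF has_derivative_add[OF has_derivative_ident 2] has_derivative_const]]) simp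
qed

lemma hq_deriv:
  fixes g :: "'a::real_normed_vector \<Rightarrow> 'b::real_inner"
  assumes "(g has_derivative g') (at x)"
  shows "((\<lambda>z. c/2 * (norm (g z))\<^sup>2) has_derivative (\<lambda>h. c * inner (g x) (g' h))) (at x)"
  by (rule has_derivative_eq_rhs[OF has_derivative_mult_right[OF sq_has_derivative[OF assms]]]) simp

lemma inner_deriv:
  fixes g :: "'a::real_normed_vector \<Rightarrow> 'b::real_inner"
  assumes "(g has_derivative g') (at x)"
  shows "((\<lambda>z. inner L (g z)) has_derivative (\<lambda>h. inner L (g' h))) (at x)"
  by (rule bounded_linear.has_derivative[OF bounded_linear_inner_right assms])

lemma sum_upd1:
  assumes "finite S" "a \<in> S" "\<And>j. j \<in> S \<Longrightarrow> j \<noteq> a \<Longrightarrow> f j = g j"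
  shows "sum f S = sum g S - g a + (f a :: real)"
proof -
  have "sum f S = f a + sum f (S - {a})" by (rule sum.remove[OF assms(1,2)])
  also have "sum f (S - {a}) = sum g (S - {a})" using assms(3) by (intro sum.cong) auto
  also have "sum g (S - {a}) = sum g S - g a" using sum.remove[OF assms(1,2), of g] by simp
  finally show ?thesis by simp
qed

lemma sum_upd2:
  assumes "finite S" "a \<in> S" "b \<in> S" "a \<noteq> b" "\<And>j. j \<in> S \<Longrightarrow> j \<noteq> a \<Longrightarrow> j \<noteq> b \<Longrightarrow> f j = g j"
  shows "sum f S = sum g S - g a - g b + f a + (f b :: real)"
proof -
  have "sum f S = f a + sum f (S - {a})" by (rule sum.remove[OF assms(1,2)])
  also have "sum f (S - {a}) = f b + sum f (S - {a} - {b})" using assms by (intro sum.remove) auto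
  also have "sum f (S - {a} - {b}) = sum g (S - {a} - {b})" using assms(5) by (intro sum.cong) auto
  also have "sum g (S - {a} - {b}) = sum g (S - {a}) - g b" using sum.remove[of "S - {a}" b g] assms by simp
  also have "sum g (S - {a}) = sum g S - g a" using sum.remove[OF assms(1,2), of g] by simp
  finally show ?thesis by simp
qed

definition res :: "(real \<Rightarrow> real) \<Rightarrow> real^'d^'d \<Rightarrow> real^'n^'d \<Rightarrow> real^'n^'d \<Rightarrow> real^'n^'d" where
  "res s M A B = A + ew s (M ** A) - B"

lemma lagr_res:
  "lagr X Y N lam mu beta sig W WN V VN Lam =
     (1/2) * (norm (VN - Y))\<^sup>2
     + lam / 2 * ((\<Sum>i=1..N-1. (norm (W i))\<^sup>2) + (norm WN)\<^sup>2)
     + mu / 2 * (\<Sum>i=1..N-1. (norm (res (sig i) (W i) (Vx X V (i-1)) (V i)))\<^sup>2)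
     + inner Lam (WN ** V (N-1) - VN)
     + beta / 2 * (norm (WN ** V (N-1) - VN))\<^sup>2"
  by (simp add: lagr_def res_def)

lemma lagr_W:
  assumes "i \<in> {1..N-1}"
  shows "lagr X Y N lam mu beta sig (W(i:=Z)) WN V VN Lam =
     lagr X Y N lam mu beta sig W WN V VN Lam
     - (lam/2 * (norm (W i))\<^sup>2 + mu/2 * (norm (res (sig i) (W i) (Vx X V (i-1)) (V i)))\<^sup>2)
     + (lam/2 * (norm Z)\<^sup>2 + mu/2 * (norm (res (sig i) Z (Vx X V (i-1)) (V i)))\<^sup>2)"
proof -
  have s1: "(\<Sum>j=1..N-1. (norm ((W(i:=Z)) j))\<^sup>2) = (\<Sum>j=1..N-1. (norm (W j))\<^sup>2) - (norm (W i))\<^sup>2 + (norm Z)\<^sup>2"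
    using sum_upd1[of "{1..N-1}" i "\<lambda>j. (norm ((W(i:=Z)) j))\<^sup>2" "\<lambda>j. (norm (W j))\<^sup>2"] assms by simp
  have s2: "(\<Sum>j=1..N-1. (norm (res (sig j) ((W(i:=Z)) j) (Vx X V (j-1)) (V j)))\<^sup>2)
     = (\<Sum>j=1..N-1. (norm (res (sig j) (W j) (Vx X V (j-1)) (V j)))\<^sup>2)
       - (norm (res (sig i) (W i) (Vx X V (i-1)) (V i)))\<^sup>2 + (norm (res (sig i) Z (Vx X V (i-1)) (V i)))\<^sup>2"
    using sum_upd1[of "{1..N-1}" i "\<lambda>j. (norm (res (sig j) ((W(i:=Z)) j) (Vx X V (j-1)) (V j)))\<^sup>2"
        "\<lambda>j. (norm (res (sig j) (W j) (Vx X V (j-1)) (V j)))\<^sup>2"] assms by simp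
  show ?thesis unfolding lagr_res s1 s2 by (simp add: algebra_simps)
qed

lemma lagr_WN:
  "lagr X Y N lam mu beta sig W Z V VN Lam =
     lagr X Y N lam mu beta sig W WN V VN Lam
     - (lam/2 * (norm WN)\<^sup>2 + inner Lam (WN ** V (N-1) - VN) + beta/2 * (norm (WN ** V (N-1) - VN))\<^sup>2)
     + (lam/2 * (norm Z)\<^sup>2 + inner Lam (Z ** V (N-1) - VN) + beta/2 * (norm (Z ** V (N-1) - VN))\<^sup>2)"
  unfolding lagr_res by (simp add: algebra_simps)

lemma lagr_VN:
  "lagr X Y N lam mu beta sig W WN V Z Lam =
     lagr X Y N lam mu beta sig W WN V VN Lam
     - (1/2 * (norm (VN - Y))\<^sup>2 + inner Lam (WN ** V (N-1) - VN) + beta/2 * (norm (WN ** V (N-1) - VN))\<^sup>2)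
     + (1/2 * (norm (Z - Y))\<^sup>2 + inner Lam (WN ** V (N-1) - Z) + beta/2 * (norm (WN ** V (N-1) - Z))\<^sup>2)"
  unfolding lagr_res by (simp add: algebra_simps)

lemma lagr_Lam:
  "lagr X Y N lam mu beta sig W WN V VN Z =
     lagr X Y N lam mu beta sig W WN V VN Lam - inner Lam (WN ** V (N-1) - VN) + inner Z (WN ** V (N-1) - VN)"
  unfolding lagr_res by (simp add: algebra_simps)

lemma lagr_V:
  assumes "i \<in> {1..N-2}"
  shows "lagr X Y N lam mu beta sig W WN (V(i:=Z)) VN Lam =
     lagr X Y N lam mu beta sig W WN V VN Lam
     - mu/2 * ((norm (res (sig i) (W i) (Vx X V (i-1)) (V i)))\<^sup>2 + (norm (res (sig (i+1)) (W (i+1)) (V i) (V (i+1))))\<^sup>2)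
     + mu/2 * ((norm (res (sig i) (W i) (Vx X V (i-1)) Z))\<^sup>2 + (norm (res (sig (i+1)) (W (i+1)) Z (V (i+1))))\<^sup>2)"
proof -
  have i: "1 \<le> i" "i + 1 \<le> N - 1" using assms by auto
  have vx: "Vx X (V(i:=Z)) (j - 1) = Vx X V (j - 1)" if "j \<noteq> i + 1" for j
    using that i by (simp add: Vx_def; arith)
  have vx2: "Vx X (V(i:=Z)) (i + 1 - 1) = Z" "Vx X V (i + 1 - 1) = V i" using i by (simp_all add: Vx_def)
  have s: "(\<Sum>j=1..N-1. (norm (res (sig j) (W j) (Vx X (V(i:=Z)) (j-1)) ((V(i:=Z)) j)))\<^sup>2)
     = (\<Sum>j=1..N-1. (norm (res (sig j) (W j) (Vx X V (j-1)) (V j)))\<^sup>2)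
       - (norm (res (sig i) (W i) (Vx X V (i-1)) (V i)))\<^sup>2 - (norm (res (sig (i+1)) (W (i+1)) (V i) (V (i+1))))\<^sup>2
       + (norm (res (sig i) (W i) (Vx X V (i-1)) Z))\<^sup>2 + (norm (res (sig (i+1)) (W (i+1)) Z (V (i+1))))\<^sup>2"
    using sum_upd2[of "{1..N-1}" i "i+1" "\<lambda>j. (norm (res (sig j) (W j) (Vx X (V(i:=Z)) (j-1)) ((V(i:=Z)) j)))\<^sup>2"
        "\<lambda>j. (norm (res (sig j) (W j) (Vx X V (j-1)) (V j)))\<^sup>2"] i vx vx2 vx[of i] by simp
  have n: "(V(i:=Z)) (N-1) = V (N-1)" using i by simp
  show ?thesis unfolding lagr_res s n by (simp add: algebra_simps)
qed

lemma lagr_VL: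
  assumes "N \<ge> 3"
  shows "lagr X Y N lam mu beta sig W WN (V(N-1:=Z)) VN Lam =
     lagr X Y N lam mu beta sig W WN V VN Lam
     - (mu/2 * (norm (res (sig (N-1)) (W (N-1)) (Vx X V (N-2)) (V (N-1))))\<^sup>2
        + inner Lam (WN ** V (N-1) - VN) + beta/2 * (norm (WN ** V (N-1) - VN))\<^sup>2)
     + (mu/2 * (norm (res (sig (N-1)) (W (N-1)) (Vx X V (N-2)) Z))\<^sup>2
        + inner Lam (WN ** Z - VN) + beta/2 * (norm (WN ** Z - VN))\<^sup>2)"
proof -
  have vx: "Vx X (V(N-1:=Z)) (j - 1) = Vx X V (j - 1)" if "j \<in> {1..N-1}" for j
    using that assms by (simp add: Vx_def; arith)
  have e: "N - 1 - 1 = N - 2" by simp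
  have s: "(\<Sum>j=1..N-1. (norm (res (sig j) (W j) (Vx X (V(N-1:=Z)) (j-1)) ((V(N-1:=Z)) j)))\<^sup>2)
     = (\<Sum>j=1..N-1. (norm (res (sig j) (W j) (Vx X V (j-1)) (V j)))\<^sup>2)
       - (norm (res (sig (N-1)) (W (N-1)) (Vx X V (N-2)) (V (N-1))))\<^sup>2
       + (norm (res (sig (N-1)) (W (N-1)) (Vx X V (N-2)) Z))\<^sup>2"
    using sum_upd1[of "{1..N-1}" "N-1" "\<lambda>j. (norm (res (sig j) (W j) (Vx X (V(N-1:=Z)) (j-1)) ((V(N-1:=Z)) j)))\<^sup>2"
        "\<lambda>j. (norm (res (sig j) (W j) (Vx X V (j-1)) (V j)))\<^sup>2"] assms vx vx[of "N-1"] e by simp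
  show ?thesis unfolding lagr_res s by (simp add: algebra_simps)
qed



lemma dew_bound:
  assumes "\<And>x. \<bar>deriv s x\<bar> \<le> p1"
  shows "norm (dew s A H) \<le> p1 * norm H"
  unfolding dew_def by (rule norm_had_le) (rule assms)

lemma dew_diffH: "dew s A H1 - dew s A H2 = dew s A (H1 - H2)"
  by (simp add: dew_def vec_eq_iff algebra_simps)

lemma dew_lip:
  assumes "\<And>x y. \<bar>deriv s x - deriv s y\<bar> \<le> p2 * \<bar>x - y\<bar>" and p2: "p2 \<ge> 0"
  shows "norm (dew s A H - dew s B H) \<le> p2 * norm (A - B) * norm H"
proof -
  have e: "dew s A H - dew s B H = (\<chi> i j. (deriv s (A$i$j) - deriv s (B$i$j)) * H$i$j)"
    by (simp add: dew_def vec_eq_iff algebra_simps)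
  have "\<bar>deriv s (A$i$j) - deriv s (B$i$j)\<bar> \<le> p2 * norm (A - B)" for i j
  proof -
    have "\<bar>deriv s (A$i$j) - deriv s (B$i$j)\<bar> \<le> p2 * \<bar>A$i$j - B$i$j\<bar>" by (rule assms(1))
    also have "\<dots> \<le> p2 * norm (A - B)"
      using entry_le_norm[of "A - B" i j] p2 by (intro mult_left_mono) auto
    finally show ?thesis .
  qed
  then show ?thesis unfolding e by (rule norm_had_le)
qed

lemma ew_lip:
  assumes "\<And>x y. \<bar>s x - s y\<bar> \<le> p1 * \<bar>x - y\<bar>" and p1: "p1 \<ge> 0"
  shows "norm (ew s A - ew s B) \<le> p1 * norm (A - B)"
proof -
  define c where "c i j = (if A$i$j = B$i$j then 0 else (s (A$i$j) - s (B$i$j)) / (A$i$j - B$i$j))" for i j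
  have e: "ew s A - ew s B = (\<chi> i j. c i j * (A - B)$i$j)"
    by (simp add: ew_def c_def vec_eq_iff)
  have "\<bar>c i j\<bar> \<le> p1" for i j
  proof (cases "A$i$j = B$i$j")
    case True then show ?thesis using p1 by (simp add: c_def)
  next
    case False
    then have "\<bar>c i j\<bar> = \<bar>s (A$i$j) - s (B$i$j)\<bar> / \<bar>A$i$j - B$i$j\<bar>" by (simp add: c_def abs_divide)
    also have "\<dots> \<le> p1" using assms(1)[of "A$i$j" "B$i$j"] False by (simp add: divide_le_eq)
    finally show ?thesis .
  qed
  then show ?thesis unfolding e by (rule norm_had_le)
qed

lemma ew_bound:
  fixes A :: "real^'c^'r"
  assumes "\<And>x. \<bar>s x\<bar> \<le> p0"
  shows "norm (ew s A) \<le> real (CARD('r) * CARD('c)) * p0"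
proof -
  have p0: "p0 \<ge> 0" using assms[of 0] by simp
  have "(norm (ew s A))\<^sup>2 = (\<Sum>i\<in>UNIV. \<Sum>j\<in>UNIV. (s (A$i$j))\<^sup>2)"
    by (simp add: norm2_entries ew_def)
  also have "\<dots> \<le> (\<Sum>i\<in>(UNIV::'r set). \<Sum>j\<in>(UNIV::'c set). p0\<^sup>2)"
  proof (intro sum_mono)
    fix i j
    have "\<bar>s (A$i$j)\<bar> \<le> \<bar>p0\<bar>" using assms[of "A$i$j"] by linarith
    then show "(s (A$i$j))\<^sup>2 \<le> p0\<^sup>2" by (simp add: abs_le_square_iff)
  qed
  also have "\<dots> = real (CARD('r) * CARD('c)) * p0\<^sup>2" by simp
  also have "\<dots> \<le> (real (CARD('r) * CARD('c)) * p0)\<^sup>2"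
  proof -
    have c1: "(1::real) \<le> real CARD('r)" by (simp add: Suc_le_eq)
    have c2: "(1::real) \<le> real CARD('c)" by (simp add: Suc_le_eq)
    have "1 \<le> real (CARD('r) * CARD('c))" using mult_mono[OF c1 c2] by simp
    then have "real (CARD('r) * CARD('c)) \<le> (real (CARD('r) * CARD('c)))\<^sup>2"
      by (simp add: power2_eq_square)
    then show ?thesis by (simp add: power_mult_distrib mult_right_mono)
  qed
  finally show ?thesis by (rule power2_le_imp_le) (use p0 in simp)
qed

lemma Qid:
  fixes L e :: "'a::real_inner"
  assumes "beta > 0"
  shows "inner L e + beta/2 * (norm e)\<^sup>2 = beta/2 * (norm (e + (1/beta) *\<^sub>R L))\<^sup>2 - (norm L)\<^sup>2 / (2*beta)"
proof -
  have "(norm (e + (1/beta) *\<^sub>R L))\<^sup>2 = (norm e)\<^sup>2 + 2/beta * inner L e + (norm L)\<^sup>2 / beta\<^sup>2"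
    unfolding power2_norm_eq_inner
    by (simp add: inner_add_left inner_add_right inner_commute power2_eq_square)
  then show ?thesis using assms by (simp add: field_simps power2_eq_square)
qed

lemma Qlow:
  fixes L e :: "'a::real_inner"
  assumes "beta > 0"
  shows "inner L e + beta/2 * (norm e)\<^sup>2 \<ge> - (norm L)\<^sup>2 / (2*beta)"
  using Qid[OF assms, of L e] assms by (simp add: divide_le_eq)

lemma quadVN:
  fixes Z Vk Y P L :: "'a::real_inner"
  assumes b: "beta > 0" and e: "(1 + beta) *\<^sub>R Vk = Y + beta *\<^sub>R P + L"
  shows "(1/2 * (norm (Z - Y))\<^sup>2 + inner L (P - Z) + beta/2 * (norm (P - Z))\<^sup>2)
       - (1/2 * (norm (Vk - Y))\<^sup>2 + inner L (P - Vk) + beta/2 * (norm (P - Vk))\<^sup>2)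
       = (1 + beta)/2 * (norm (Z - Vk))\<^sup>2"
proof -
  have Y: "Y = (1 + beta) *\<^sub>R Vk - beta *\<^sub>R P - L" using e by (simp add: algebra_simps)
  show ?thesis unfolding Y power2_norm_eq_inner
    by (simp add: inner_diff_left inner_diff_right inner_add_left inner_add_right inner_commute algebra_simps)
qed

lemma grad_via:
  fixes F :: "'a::euclidean_space \<Rightarrow> real"
  assumes "\<And>Z. F Z = c + T Z" "(T has_derivative T') (at x)" "C \<ge> 0" "\<And>h. \<bar>T' h\<bar> \<le> C * norm h"
  shows "norm (grad_of F x) \<le> C"
proof -
  have "F = (\<lambda>Z. c + T Z)" using assms(1) by auto
  moreover have "((\<lambda>Z. c + T Z) has_derivative (\<lambda>h. 0 + T' h)) (at x)"
    by (rule has_derivative_add[OF has_derivative_const assms(2)])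
  ultimately have "(F has_derivative (\<lambda>h. 0 + T' h)) (at x)" by simp
  then show ?thesis by (rule grad_bound) (use assms in auto)
qed

lemma abs_inner_le: "\<bar>inner a b\<bar> \<le> norm a * norm b"
  by (rule Cauchy_Schwarz_ineq2)



locale admm =
  fixes X :: "real^'n^'d" and Y :: "real^'n^'q"
    and N :: nat and lam mu beta psi0 psi1 psi2 :: real
    and sig :: "nat \<Rightarrow> real \<Rightarrow> real"
    and om nu :: "nat \<Rightarrow> nat \<Rightarrow> real"
    and om_min om_max nu_min nu_max :: "nat \<Rightarrow> real"
    and W :: "nat \<Rightarrow> nat \<Rightarrow> real^'d^'d" and WN :: "nat \<Rightarrow> real^'d^'q"
    and V :: "nat \<Rightarrow> nat \<Rightarrow> real^'n^'d" and VN Lam :: "nat \<Rightarrow> real^'n^'q"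
  assumes N3: "N \<ge> 3" and lam: "lam > 0" and mu: "mu > 0" and beta: "beta > 1"
    and an: "\<forall>i\<in>{1..N-1}. real_analytic (sig i)"
    and sb0: "\<forall>i\<in>{1..N-1}. \<forall>x. \<bar>sig i x\<bar> \<le> psi0"
    and sb1: "\<forall>i\<in>{1..N-1}. \<forall>x. \<bar>deriv (sig i) x\<bar> \<le> psi1"
    and sb2: "\<forall>i\<in>{1..N-1}. \<forall>x. \<bar>deriv (deriv (sig i)) x\<bar> \<le> psi2"
    and omb: "\<forall>i\<in>{1..N-1}. \<forall>k. 0 < om_min i \<and> om_min i \<le> om i k \<and> om i k \<le> om_max i"
    and nub: "\<forall>i\<in>{1..N-2}. \<forall>k. 0 < nu_min i \<and> nu_min i \<le> nu i k \<and> nu i k \<le> nu_max i"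
    and it: "admm2s_iterates X Y N lam mu beta sig om nu W WN V VN Lam"
begin

abbreviation "L Wf WNv Vf VNv Lv \<equiv> lagr X Y N lam mu beta sig Wf WNv Vf VNv Lv"

lemma beta0: "beta > 0" using beta by simp

lemma sig_d1: "i \<in> {1..N-1} \<Longrightarrow> (sig i has_real_derivative deriv (sig i) x) (at x)"
  using an analytic_derivs(1) by blast

lemma sig_d2: "i \<in> {1..N-1} \<Longrightarrow> (deriv (sig i) has_real_derivative deriv (deriv (sig i)) x) (at x)"
  using an analytic_derivs(2) by blast

lemma sig_lip: "i \<in> {1..N-1} \<Longrightarrow> \<bar>sig i x - sig i y\<bar> \<le> psi1 * \<bar>x - y\<bar>"
  by (rule lipschitz_deriv[of _ "deriv (sig i)"]) (use sig_d1 sb1 in auto)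

lemma dsig_lip: "i \<in> {1..N-1} \<Longrightarrow> \<bar>deriv (sig i) x - deriv (sig i) y\<bar> \<le> psi2 * \<bar>x - y\<bar>"
  by (rule lipschitz_deriv[of _ "deriv (deriv (sig i))"]) (use sig_d2 sb2 in auto)

lemma one_in: "1 \<in> {1..N-1}" using N3 by auto

lemma psi0: "psi0 \<ge> 0" using sb0 one_in by (meson abs_ge_zero order_trans)
lemma psi1: "psi1 \<ge> 0" using sb1 one_in by (meson abs_ge_zero order_trans)
lemma psi2: "psi2 \<ge> 0" using sb2 one_in by (meson abs_ge_zero order_trans)

lemma stepA: assumes "k \<ge> 1"
  shows "lam/2 * (norm (WN k))\<^sup>2 + beta/2 * (norm (WN k ** V (k-1) (N-1) - VN (k-1) + (1/beta) *\<^sub>R Lam (k-1)))\<^sup>2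
          \<le> lam/2 * (norm Z)\<^sup>2 + beta/2 * (norm (Z ** V (k-1) (N-1) - VN (k-1) + (1/beta) *\<^sub>R Lam (k-1)))\<^sup>2"
  using it assms unfolding admm2s_iterates_def by blast

lemma stepB: assumes "k \<ge> 1" "i \<in> {1..N-1}"
  shows "lam/2 * (norm (W k i))\<^sup>2
          + mu/2 * (norm (Vx X (V (k-1)) (i-1) + ew (sig i) (W k i ** Vx X (V (k-1)) (i-1)) - V (k-1) i))\<^sup>2
          + om i (k-1) / 2 * (norm (W k i - W (k-1) i))\<^sup>2
        \<le> lam/2 * (norm Z)\<^sup>2
          + mu/2 * (norm (Vx X (V (k-1)) (i-1) + ew (sig i) (Z ** Vx X (V (k-1)) (i-1)) - V (k-1) i))\<^sup>2
          + om i (k-1) / 2 * (norm (Z - W (k-1) i))\<^sup>2"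
  using it assms unfolding admm2s_iterates_def by blast

lemma stepC: assumes "k \<ge> 1" "i \<in> {1..N-2}"
  shows "mu/2 * (norm (Vx X (V k) (i-1) + ew (sig i) (W k i ** Vx X (V k) (i-1)) - V k i))\<^sup>2
          + mu/2 * (norm (V k i + ew (sig (i+1)) (W k (i+1) ** V k i) - V (k-1) (i+1)))\<^sup>2
          + nu i (k-1) / 2 * (norm (V k i - V (k-1) i))\<^sup>2
        \<le> mu/2 * (norm (Vx X (V k) (i-1) + ew (sig i) (W k i ** Vx X (V k) (i-1)) - Z))\<^sup>2
          + mu/2 * (norm (Z + ew (sig (i+1)) (W k (i+1) ** Z) - V (k-1) (i+1)))\<^sup>2
          + nu i (k-1) / 2 * (norm (Z - V (k-1) i))\<^sup>2"
  using it assms unfolding admm2s_iterates_def by blast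

lemma stepD: assumes "k \<ge> 1"
  shows "mu/2 * (norm (Vx X (V k) (N-2) + ew (sig (N-1)) (W k (N-1) ** Vx X (V k) (N-2)) - V k (N-1)))\<^sup>2
          + beta/2 * (norm (WN k ** V k (N-1) - VN (k-1) + (1/beta) *\<^sub>R Lam (k-1)))\<^sup>2
        \<le> mu/2 * (norm (Vx X (V k) (N-2) + ew (sig (N-1)) (W k (N-1) ** Vx X (V k) (N-2)) - Z))\<^sup>2
          + beta/2 * (norm (WN k ** Z - VN (k-1) + (1/beta) *\<^sub>R Lam (k-1)))\<^sup>2"
  using it assms unfolding admm2s_iterates_def by blast

lemma stepE: assumes "k \<ge> 1"
  shows "VN k = (1/(1+beta)) *\<^sub>R (Y + beta *\<^sub>R (WN k ** V k (N-1)) + Lam (k-1))"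
  using it assms unfolding admm2s_iterates_def by blast

lemma stepF: assumes "k \<ge> 1"
  shows "Lam k = Lam (k-1) + beta *\<^sub>R (WN k ** V k (N-1) - VN k)"
  using it assms unfolding admm2s_iterates_def by blast

lemma stepE': assumes "k \<ge> 1"
  shows "(1 + beta) *\<^sub>R VN k = Y + beta *\<^sub>R (WN k ** V k (N-1)) + Lam (k-1)"
proof -
  have "1 + beta \<noteq> 0" using beta by simp
  then show ?thesis using stepE[OF assms] by simp
qed

lemma LamVN: assumes "k \<ge> 1" shows "Lam k = VN k - Y"
proof -
  have "Lam k = Lam (k-1) + beta *\<^sub>R (WN k ** V k (N-1)) - beta *\<^sub>R VN k"
    using stepF[OF assms] by (simp add: algebra_simps)
  also have "Lam (k-1) = (1 + beta) *\<^sub>R VN k - Y - beta *\<^sub>R (WN k ** V k (N-1))"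
    using stepE'[OF assms] by (simp add: algebra_simps)
  finally show ?thesis by (simp add: algebra_simps)
qed

lemma eLam: assumes "k \<ge> 1"
  shows "WN k ** V k (N-1) - VN k = (1/beta) *\<^sub>R (Lam k - Lam (k-1))"
  using stepF[OF assms] beta0 by simp

end


context admm begin

lemma Vx_cong: assumes "\<forall>i\<in>{1..N-1}. U i = U' i" "j \<le> N - 2"
  shows "Vx X U j = Vx X U' j"
  using assms N3 by (auto simp: Vx_def)

lemma lagr_congV: assumes "\<forall>i\<in>{1..N-1}. U i = U' i"
  shows "L Wf WNv U VNv Lv = L Wf WNv U' VNv Lv"
proof -
  have "(\<Sum>i=1..N-1. (norm (res (sig i) (Wf i) (Vx X U (i-1)) (U i)))\<^sup>2)
      = (\<Sum>i=1..N-1. (norm (res (sig i) (Wf i) (Vx X U' (i-1)) (U' i)))\<^sup>2)"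
    using assms Vx_cong[OF assms] by (intro sum.cong) auto
  moreover have "U (N-1) = U' (N-1)" using assms N3 by auto
  ultimately show ?thesis unfolding lagr_res by simp
qed

lemma lagr_split:
  "L Wf WNv Vf VNv Lv = 1/2 * (norm (VNv - Y))\<^sup>2
     + (\<Sum>i=1..N-1. lam/2 * (norm (Wf i))\<^sup>2 + mu/2 * (norm (res (sig i) (Wf i) (Vx X Vf (i-1)) (Vf i)))\<^sup>2)
     + (lam/2 * (norm WNv)\<^sup>2 + beta/2 * (norm (WNv ** Vf (N-1) - VNv + (1/beta) *\<^sub>R Lv))\<^sup>2)
     - (norm Lv)\<^sup>2 / (2*beta)"
proof -
  have q: "inner Lv (WNv ** Vf (N-1) - VNv) + beta/2 * (norm (WNv ** Vf (N-1) - VNv))\<^sup>2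
     = beta/2 * (norm (WNv ** Vf (N-1) - VNv + (1/beta) *\<^sub>R Lv))\<^sup>2 - (norm Lv)\<^sup>2 / (2*beta)"
    by (rule Qid[OF beta0])
  have s: "(\<Sum>i=1..N-1. lam/2 * (norm (Wf i))\<^sup>2 + mu/2 * (norm (res (sig i) (Wf i) (Vx X Vf (i-1)) (Vf i)))\<^sup>2)
     = lam/2 * (\<Sum>i=1..N-1. (norm (Wf i))\<^sup>2) + mu/2 * (\<Sum>i=1..N-1. (norm (res (sig i) (Wf i) (Vx X Vf (i-1)) (Vf i)))\<^sup>2)"
    by (simp add: sum.distrib sum_distrib_left)
  show ?thesis unfolding lagr_res s using q by (simp add: algebra_simps)
qed

lemma descA: assumes k: "k \<ge> 1"
  shows "L (W k) (WN k) (V (k-1)) (VN (k-1)) (Lam (k-1)) \<le> L (W (k-1)) (WN (k-1)) (V (k-1)) (VN (k-1)) (Lam (k-1))"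
proof -
  let ?o = "k - 1"
  have hb: "lam/2 * (norm (W k i))\<^sup>2 + mu/2 * (norm (res (sig i) (W k i) (Vx X (V ?o) (i-1)) (V ?o i)))\<^sup>2
      \<le> lam/2 * (norm (W ?o i))\<^sup>2 + mu/2 * (norm (res (sig i) (W ?o i) (Vx X (V ?o) (i-1)) (V ?o i)))\<^sup>2"
    if i: "i \<in> {1..N-1}" for i
  proof -
    have "0 < om_min i \<and> om_min i \<le> om i (k-1)" using omb i by blast
    then have "0 \<le> om i (k-1)" by linarith
    then have "0 \<le> om i (k-1) / 2 * (norm (W k i - W (k-1) i))\<^sup>2" by simp
    then show ?thesis using stepB[OF k i, of "W ?o i"] unfolding res_def by simp
  qed
  have ha: "lam/2 * (norm (WN k))\<^sup>2 + beta/2 * (norm (WN k ** V ?o (N-1) - VN ?o + (1/beta) *\<^sub>R Lam ?o))\<^sup>2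
     \<le> lam/2 * (norm (WN ?o))\<^sup>2 + beta/2 * (norm (WN ?o ** V ?o (N-1) - VN ?o + (1/beta) *\<^sub>R Lam ?o))\<^sup>2"
    by (rule stepA[OF k])
  have "(\<Sum>i=1..N-1. lam/2 * (norm (W k i))\<^sup>2 + mu/2 * (norm (res (sig i) (W k i) (Vx X (V ?o) (i-1)) (V ?o i)))\<^sup>2)
     \<le> (\<Sum>i=1..N-1. lam/2 * (norm (W ?o i))\<^sup>2 + mu/2 * (norm (res (sig i) (W ?o i) (Vx X (V ?o) (i-1)) (V ?o i)))\<^sup>2)"
    by (rule sum_mono) (rule hb)
  then show ?thesis unfolding lagr_split using ha by linarith
qed

lemma descV: assumes k: "k \<ge> 1"
  shows "L (W k) (WN k) (V k) (VN (k-1)) (Lam (k-1)) \<le> L (W k) (WN k) (V (k-1)) (VN (k-1)) (Lam (k-1))"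
proof -
  let ?o = "k - 1"
  define U where "U j = (\<lambda>i. if i \<le> j then V k i else V ?o i)" for j
  let ?F = "\<lambda>Vf. L (W k) (WN k) Vf (VN ?o) (Lam ?o)"
  have step: "?F (U (Suc j)) \<le> ?F (U j)" if j: "Suc j \<le> N - 1" for j
  proof -
    let ?m = "Suc j"
    have Ue: "U (Suc j) = (U j)(?m := V k ?m)" by (auto simp: U_def)
    have Um: "U j ?m = V ?o ?m" by (simp add: U_def)
    have vx: "Vx X (U j) (?m - 1) = Vx X (V k) (?m - 1)" by (simp add: Vx_def U_def)
    show ?thesis
    proof (cases "?m \<le> N - 2")
      case True
      then have m: "?m \<in> {1..N-2}" by auto
      have Um1: "U j (?m + 1) = V ?o (?m + 1)" by (simp add: U_def)
      have "0 < nu_min ?m \<and> nu_min ?m \<le> nu ?m (k-1)" using nub m by blast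
      then have "0 \<le> nu ?m (k-1)" by linarith
      then have "0 \<le> nu ?m (k-1) / 2 * (norm (V k ?m - V (k-1) ?m))\<^sup>2" by simp
      then have c: "mu/2 * ((norm (res (sig ?m) (W k ?m) (Vx X (V k) (?m-1)) (V k ?m)))\<^sup>2
              + (norm (res (sig (?m+1)) (W k (?m+1)) (V k ?m) (V ?o (?m+1))))\<^sup>2)
          \<le> mu/2 * ((norm (res (sig ?m) (W k ?m) (Vx X (V k) (?m-1)) (V ?o ?m)))\<^sup>2
              + (norm (res (sig (?m+1)) (W k (?m+1)) (V ?o ?m) (V ?o (?m+1))))\<^sup>2)"
        using stepC[OF k m, of "V ?o ?m"] unfolding res_def by (simp add: algebra_simps)
      show ?thesis unfolding Ue lagr_V[OF m] Um Um1 vx using c by simp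
    next
      case False
      then have mN: "?m = N - 1" using j by simp
      have n2: "N - 1 - 1 = N - 2" by simp
      have vx2: "Vx X (U j) (N - 2) = Vx X (V k) (N - 2)" using vx mN n2 by simp
      have q1: "inner (Lam ?o) (WN k ** Z - VN ?o) + beta/2 * (norm (WN k ** Z - VN ?o))\<^sup>2
          = beta/2 * (norm (WN k ** Z - VN ?o + (1/beta) *\<^sub>R Lam ?o))\<^sup>2 - (norm (Lam ?o))\<^sup>2 / (2*beta)" for Z
        by (rule Qid[OF beta0])
      have d: "mu/2 * (norm (res (sig (N-1)) (W k (N-1)) (Vx X (V k) (N-2)) (V k (N-1))))\<^sup>2
            + beta/2 * (norm (WN k ** V k (N-1) - VN ?o + (1/beta) *\<^sub>R Lam ?o))\<^sup>2
          \<le> mu/2 * (norm (res (sig (N-1)) (W k (N-1)) (Vx X (V k) (N-2)) (V ?o (N-1))))\<^sup>2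
            + beta/2 * (norm (WN k ** V ?o (N-1) - VN ?o + (1/beta) *\<^sub>R Lam ?o))\<^sup>2"
        using stepD[OF k, of "V ?o (N-1)"] unfolding res_def by simp
      have Ue2: "U (Suc j) = (U j)(N - 1 := V k (N-1))" using Ue mN by simp
      have Um2: "U j (N-1) = V ?o (N-1)" using Um mN by simp
      have T: "mu/2 * (norm (res (sig (N-1)) (W k (N-1)) (Vx X (V k) (N-2)) (V k (N-1))))\<^sup>2
            + inner (Lam ?o) (WN k ** V k (N-1) - VN ?o) + beta/2 * (norm (WN k ** V k (N-1) - VN ?o))\<^sup>2
          \<le> mu/2 * (norm (res (sig (N-1)) (W k (N-1)) (Vx X (V k) (N-2)) (V ?o (N-1))))\<^sup>2
            + inner (Lam ?o) (WN k ** V ?o (N-1) - VN ?o) + beta/2 * (norm (WN k ** V ?o (N-1) - VN ?o))\<^sup>2"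
        using d q1[of "V k (N-1)"] q1[of "V ?o (N-1)"] by linarith
      show ?thesis unfolding Ue2 lagr_VL[OF N3] Um2 vx2 using T by linarith
    qed
  qed
  have mono: "?F (U j) \<le> ?F (U 0)" if "j \<le> N - 1" for j
    using that
  proof (induction j)
    case 0 then show ?case by simp
  next
    case (Suc j)
    then show ?case using step[of j] by simp
  qed
  have e0: "?F (U 0) = ?F (V ?o)" by (rule lagr_congV) (auto simp: U_def)
  have e1: "?F (U (N-1)) = ?F (V k)" by (rule lagr_congV) (auto simp: U_def)
  show ?thesis using mono[of "N-1"] e0 e1 by simp
qed

lemma descVN: assumes k: "k \<ge> 1"
  shows "L (W k) (WN k) (V k) (VN k) (Lam (k-1)) + (1+beta)/2 * (norm (VN (k-1) - VN k))\<^sup>2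
       = L (W k) (WN k) (V k) (VN (k-1)) (Lam (k-1))"
  using lagr_VN[of X Y N lam mu beta sig "W k" "WN k" "V k" "VN (k-1)" "Lam (k-1)" "VN k"]
    quadVN[OF beta0 stepE'[OF k], of "VN (k-1)"] by simp

lemma descLam: assumes k: "k \<ge> 1"
  shows "L (W k) (WN k) (V k) (VN k) (Lam k)
       = L (W k) (WN k) (V k) (VN k) (Lam (k-1)) + (norm (Lam k - Lam (k-1)))\<^sup>2 / beta"
proof -
  have "inner (Lam k) (WN k ** V k (N-1) - VN k) - inner (Lam (k-1)) (WN k ** V k (N-1) - VN k)
      = (norm (Lam k - Lam (k-1)))\<^sup>2 / beta"
    unfolding eLam[OF k] using beta0
    by (simp add: inner_diff_left diff_divide_distrib power2_norm_eq_inner)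
  then show ?thesis
    using lagr_Lam[of X Y N lam mu beta sig "W k" "WN k" "V k" "VN k" "Lam k" "Lam (k-1)"] by simp
qed

definition Lk where "Lk k = L (W k) (WN k) (V k) (VN k) (Lam k)"

lemma desc: assumes k: "k \<ge> 2" shows "Lk k \<le> Lk (k-1)"
proof -
  have k1: "k \<ge> 1" "k - 1 \<ge> 1" using k by auto
  have d: "Lam k - Lam (k-1) = VN k - VN (k-1)" using LamVN[OF k1(1)] LamVN[OF k1(2)] by simp
  let ?d = "(norm (VN (k-1) - VN k))\<^sup>2"
  have dd: "(norm (Lam k - Lam (k-1)))\<^sup>2 = ?d" unfolding d by (simp add: norm_minus_commute)
  have c: "?d / beta \<le> (1+beta)/2 * ?d"
  proof -
    have "?d / beta \<le> ?d" using beta by (simp add: divide_le_eq) (simp add: mult_le_cancel_left1)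
    also have "\<dots> \<le> (1+beta)/2 * ?d" using mult_right_mono[of 1 "(1+beta)/2" ?d] beta by simp
    finally show ?thesis .
  qed
  have c2: "(norm (Lam k - Lam (k-1)))\<^sup>2 / beta \<le> (1+beta)/2 * ?d" using c dd by simp
  show ?thesis unfolding Lk_def
    using descLam[OF k1(1)] descVN[OF k1(1)] descV[OF k1(1)] descA[OF k1(1)] c2 by linarith
qed

lemma desc1: assumes "k \<ge> 1" shows "Lk k \<le> Lk 1"
  using assms
proof (induction k)
  case 0 then show ?case by simp
next
  case (Suc k)
  show ?case
  proof (cases "k = 0")
    case True then show ?thesis by simp
  next
    case False
    then have "Lk (Suc k) \<le> Lk k" using desc[of "Suc k"] by simp
    then show ?thesis using Suc False by simp
  qed
qed

end


lemma sq_bound: fixes x a M :: real assumes "a > 0" "a/2 * x\<^sup>2 \<le> M" shows "x \<le> 1 + 2*M/a"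
proof -
  have "x\<^sup>2 \<le> 2*M/a" using assms by (simp add: field_simps)
  moreover have "x \<le> 1 + x\<^sup>2"
  proof -
    have h: "0 \<le> (x - 1/2)*(x - 1/2)" by simp
    have "(x - 1/2)*(x - 1/2) = x*x - x + 1/4" by (simp add: algebra_simps)
    then have "x \<le> 1 + x*x" using h by linarith
    then show ?thesis by (simp add: power2_eq_square)
  qed
  ultimately show ?thesis by linarith
qed

context admm begin

lemma lowb: assumes k: "k \<ge> 1"
  shows "(beta-1)/(2*beta) * (norm (Lam k))\<^sup>2 + lam/2 * (\<Sum>i=1..N-1. (norm (W k i))\<^sup>2) + lam/2 * (norm (WN k))\<^sup>2
      + mu/2 * (\<Sum>i=1..N-1. (norm (res (sig i) (W k i) (Vx X (V k) (i-1)) (V k i)))\<^sup>2) \<le> Lk k"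
proof -
  have q: "inner (Lam k) (WN k ** V k (N-1) - VN k) + beta/2 * (norm (WN k ** V k (N-1) - VN k))\<^sup>2 \<ge> - (norm (Lam k))\<^sup>2 / (2*beta)"
    by (rule Qlow[OF beta0])
  have e: "(beta-1)/(2*beta) * (norm (Lam k))\<^sup>2 = 1/2 * (norm (Lam k))\<^sup>2 - (norm (Lam k))\<^sup>2 / (2*beta)"
    using beta0 by (simp add: field_simps)
  have eq: "Lk k = 1/2 * (norm (Lam k))\<^sup>2 + lam/2 * (\<Sum>i=1..N-1. (norm (W k i))\<^sup>2) + lam/2 * (norm (WN k))\<^sup>2
      + mu/2 * (\<Sum>i=1..N-1. (norm (res (sig i) (W k i) (Vx X (V k) (i-1)) (V k i)))\<^sup>2)
      + (inner (Lam k) (WN k ** V k (N-1) - VN k) + beta/2 * (norm (WN k ** V k (N-1) - VN k))\<^sup>2)"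
    unfolding Lk_def lagr_res LamVN[OF k, symmetric] by (simp add: algebra_simps)
  show ?thesis using eq q e by linarith
qed

lemma sumsq_le: assumes "i \<in> {1..N-1}" shows "(f i)\<^sup>2 \<le> (\<Sum>i=1..N-1. (f i)\<^sup>2::real)"
  by (rule member_le_sum) (use assms in auto)

definition L1 where "L1 = Lk 1"
definition K0 where "K0 = real (CARD('d) * CARD('n)) * psi0"
definition Rb where "Rb = 1 + 2 * L1 / mu"

lemma K0: "K0 \<ge> 0" unfolding K0_def using psi0 by simp

lemma parts: assumes k: "k \<ge> 1"
  shows "0 \<le> (beta-1)/(2*beta) * (norm (Lam k))\<^sup>2" "0 \<le> lam/2 * (\<Sum>i=1..N-1. (norm (W k i))\<^sup>2)"
    "0 \<le> lam/2 * (norm (WN k))\<^sup>2" "0 \<le> mu/2 * (\<Sum>i=1..N-1. (norm (res (sig i) (W k i) (Vx X (V k) (i-1)) (V k i)))\<^sup>2)"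
proof -
  show "0 \<le> (beta-1)/(2*beta) * (norm (Lam k))\<^sup>2" using beta by simp
  show "0 \<le> lam/2 * (\<Sum>i=1..N-1. (norm (W k i))\<^sup>2)" using lam by (intro mult_nonneg_nonneg sum_nonneg) auto
  show "0 \<le> lam/2 * (norm (WN k))\<^sup>2" using lam by simp
  show "0 \<le> mu/2 * (\<Sum>i=1..N-1. (norm (res (sig i) (W k i) (Vx X (V k) (i-1)) (V k i)))\<^sup>2)"
    using mu by (intro mult_nonneg_nonneg sum_nonneg) auto
qed

lemma L1: "L1 \<ge> 0" unfolding L1_def using lowb[of 1] parts[of 1] by linarith

lemma Lk_le: "k \<ge> 1 \<Longrightarrow> Lk k \<le> L1" unfolding L1_def by (rule desc1)

lemma bW: assumes k: "k \<ge> 1" and i: "i \<in> {1..N-1}" shows "norm (W k i) \<le> 1 + 2*L1/lam"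
proof (rule sq_bound[OF lam])
  have "lam/2 * (norm (W k i))\<^sup>2 \<le> lam/2 * (\<Sum>i=1..N-1. (norm (W k i))\<^sup>2)"
    using sumsq_le[OF i, of "\<lambda>i. norm (W k i)"] lam by simp
  then show "lam/2 * (norm (W k i))\<^sup>2 \<le> L1" using lowb[OF k] parts[OF k] Lk_le[OF k] by linarith
qed

lemma bWN: assumes k: "k \<ge> 1" shows "norm (WN k) \<le> 1 + 2*L1/lam"
  by (rule sq_bound[OF lam]) (use lowb[OF k] parts[OF k] Lk_le[OF k] in linarith)

lemma bLam: assumes k: "k \<ge> 1" shows "norm (Lam k) \<le> 1 + 2*L1/((beta-1)/beta)"
proof (rule sq_bound)
  show "(beta-1)/beta > 0" using beta by simp
  have a: "(beta-1)/(2*beta) * (norm (Lam k))\<^sup>2 \<le> L1" using lowb[OF k] parts[OF k] Lk_le[OF k] by linarith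
  have eq: "(beta-1)/beta/2 = (beta-1)/(2*beta)" by simp
  show "(beta-1)/beta/2 * (norm (Lam k))\<^sup>2 \<le> L1" using a by (simp only: eq)
qed

lemma bres: assumes k: "k \<ge> 1" and i: "i \<in> {1..N-1}"
  shows "norm (res (sig i) (W k i) (Vx X (V k) (i-1)) (V k i)) \<le> Rb"
  unfolding Rb_def
proof (rule sq_bound[OF mu])
  have "mu/2 * (norm (res (sig i) (W k i) (Vx X (V k) (i-1)) (V k i)))\<^sup>2
     \<le> mu/2 * (\<Sum>i=1..N-1. (norm (res (sig i) (W k i) (Vx X (V k) (i-1)) (V k i)))\<^sup>2)"
    using sumsq_le[OF i, of "\<lambda>i. norm (res (sig i) (W k i) (Vx X (V k) (i-1)) (V k i))"] mu by simp
  then show "mu/2 * (norm (res (sig i) (W k i) (Vx X (V k) (i-1)) (V k i)))\<^sup>2 \<le> L1"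
    using lowb[OF k] parts[OF k] Lk_le[OF k] by linarith
qed

lemma ewb: "i \<in> {1..N-1} \<Longrightarrow> norm (ew (sig i) (A::real^'n^'d)) \<le> K0"
  unfolding K0_def by (rule ew_bound) (use sb0 in auto)

lemma bVx: assumes k: "k \<ge> 1" shows "j \<le> N - 1 \<Longrightarrow> norm (Vx X (V k) j) \<le> norm X + real j * (K0 + Rb)"
proof (induction j)
  case 0 then show ?case by (simp add: Vx_def)
next
  case (Suc j)
  have i: "Suc j \<in> {1..N-1}" using Suc by auto
  have "Vx X (V k) (Suc j) = V k (Suc j)" by (simp add: Vx_def)
  also have "\<dots> = Vx X (V k) j + ew (sig (Suc j)) (W k (Suc j) ** Vx X (V k) j) - res (sig (Suc j)) (W k (Suc j)) (Vx X (V k) j) (V k (Suc j))"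
    by (simp add: res_def)
  finally have "norm (Vx X (V k) (Suc j)) \<le> norm (Vx X (V k) j) + K0 + Rb"
    using ewb[OF i, of "W k (Suc j) ** Vx X (V k) j"] bres[OF k i] norm_triangle_ineq4 norm_triangle_ineq
    by (smt (verit) diff_Suc_1)
  then show ?case using Suc by (simp add: algebra_simps)
qed

definition B1 where "B1 = (1 + 2*L1/lam) + (1 + 2*L1/((beta-1)/beta)) + norm Y + norm X + real N * (K0 + Rb)"
definition B0 where "B0 = (\<Sum>i=1..N-1. norm (W 0 i) + norm (V 0 i)) + norm (WN 0) + norm (VN 0) + norm (Lam 0)"
definition Bd where "Bd = B1 + B0"

lemma nn: "0 \<le> 2*L1/lam" "0 \<le> 2*L1/((beta-1)/beta)" "0 \<le> Rb"
  using L1 lam beta mu by (auto simp: Rb_def)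

lemma B0: "B0 \<ge> 0" unfolding B0_def by (auto intro!: sum_nonneg add_nonneg_nonneg)
lemma B1: "B1 \<ge> 0" unfolding B1_def using nn K0 by (auto intro!: add_nonneg_nonneg)
lemma Bd: "Bd \<ge> 0" unfolding Bd_def using B0 B1 by simp

lemma bV1: assumes k: "k \<ge> 1" and i: "i \<in> {1..N-1}" shows "norm (V k i) \<le> B1"
proof -
  have "norm (V k i) = norm (Vx X (V k) i)" using i by (simp add: Vx_def)
  also have "\<dots> \<le> norm X + real i * (K0 + Rb)" using bVx[OF k] i by auto
  also have "\<dots> \<le> norm X + real N * (K0 + Rb)" using i K0 nn by (intro add_left_mono mult_right_mono) auto
  finally show ?thesis unfolding B1_def using nn norm_ge_zero[of Y] by linarith
qed

lemma B0_parts: "i \<in> {1..N-1} \<Longrightarrow> norm (W 0 i) \<le> B0" "i \<in> {1..N-1} \<Longrightarrow> norm (V 0 i) \<le> B0"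
  "norm (WN 0) \<le> B0" "norm (VN 0) \<le> B0" "norm (Lam 0) \<le> B0"
proof -
  have s: "0 \<le> (\<Sum>i=1..N-1. norm (W 0 i) + norm (V 0 i))" by (auto intro!: sum_nonneg)
  have m: "norm (W 0 i) + norm (V 0 i) \<le> (\<Sum>i=1..N-1. norm (W 0 i) + norm (V 0 i))" if "i \<in> {1..N-1}" for i
    by (rule member_le_sum) (use that in auto)
  show "i \<in> {1..N-1} \<Longrightarrow> norm (W 0 i) \<le> B0" using m[of i] unfolding B0_def by (smt (verit) norm_ge_zero)
  show "i \<in> {1..N-1} \<Longrightarrow> norm (V 0 i) \<le> B0" using m[of i] unfolding B0_def by (smt (verit) norm_ge_zero)
  show "norm (WN 0) \<le> B0" "norm (VN 0) \<le> B0" "norm (Lam 0) \<le> B0" using s unfolding B0_def by auto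
qed

lemma bnd1: assumes "k \<ge> 1"
  shows "i \<in> {1..N-1} \<Longrightarrow> norm (W k i) \<le> B1" "i \<in> {1..N-1} \<Longrightarrow> norm (V k i) \<le> B1"
    "norm (WN k) \<le> B1" "norm (VN k) \<le> B1" "norm (Lam k) \<le> B1"
proof -
  note n = nn norm_ge_zero[of X] norm_ge_zero[of Y]
  have NK: "0 \<le> real N * (K0 + Rb)" using K0 nn by simp
  show "norm (W k i) \<le> B1" if i: "i \<in> {1..N-1}"
  proof -
    have "norm (W k i) \<le> 1 + 2*L1/lam" by (rule bW[OF assms i])
    then show ?thesis using n NK unfolding B1_def by linarith
  qed
  show "i \<in> {1..N-1} \<Longrightarrow> norm (V k i) \<le> B1" by (rule bV1[OF assms])
  show "norm (WN k) \<le> B1" using bWN[OF assms] n NK unfolding B1_def by linarith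
  show "norm (Lam k) \<le> B1" using bLam[OF assms] n NK unfolding B1_def by linarith
  have "norm (VN k) \<le> norm (Lam k) + norm Y" using LamVN[OF assms] norm_triangle_ineq[of "Lam k" Y] by simp
  then show "norm (VN k) \<le> B1" using bLam[OF assms] n NK unfolding B1_def by linarith
qed

lemma le_Bd: "x \<le> B0 \<or> x \<le> B1 \<Longrightarrow> x \<le> Bd" using B0 B1 unfolding Bd_def by linarith

lemma bnd:
  shows "i \<in> {1..N-1} \<Longrightarrow> norm (W k i) \<le> Bd" "i \<in> {1..N-1} \<Longrightarrow> norm (V k i) \<le> Bd"
    "norm (WN k) \<le> Bd" "norm (VN k) \<le> Bd" "norm (Lam k) \<le> Bd" "norm X \<le> Bd"
proof -
  have X: "norm X \<le> B1" unfolding B1_def using nn K0 norm_ge_zero[of Y] by simp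
  show "norm X \<le> Bd" using X by (intro le_Bd) simp
  show "i \<in> {1..N-1} \<Longrightarrow> norm (W k i) \<le> Bd"
    by (rule le_Bd) (cases "k = 0", use B0_parts bnd1 in auto)
  show "i \<in> {1..N-1} \<Longrightarrow> norm (V k i) \<le> Bd"
    by (rule le_Bd) (cases "k = 0", use B0_parts bnd1 in auto)
  show "norm (WN k) \<le> Bd"
    by (rule le_Bd) (cases "k = 0", use B0_parts bnd1 in auto)
  show "norm (VN k) \<le> Bd"
    by (rule le_Bd) (cases "k = 0", use B0_parts bnd1 in auto)
  show "norm (Lam k) \<le> Bd"
    by (rule le_Bd) (cases "k = 0", use B0_parts bnd1 in auto)
qed

lemma bndVx: "j \<le> N - 1 \<Longrightarrow> norm (Vx X (V k) j) \<le> Bd"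
  using bnd(2)[of j k] bnd(6) by (cases "j = 0") (auto simp: Vx_def)

end



lemma tri3: "norm (a + b - c) \<le> norm a + norm b + norm (c::'a::real_normed_vector)"
  using norm_triangle_ineq[of "a + b" "- c"] norm_triangle_ineq[of a b] by simp

lemma chainR: "a \<le> x * y \<Longrightarrow> x \<le> D \<Longrightarrow> 0 \<le> y \<Longrightarrow> a \<le> D * (y::real)"
  by (meson mult_right_mono order_trans)
lemma chainL: "a \<le> y * x \<Longrightarrow> x \<le> D \<Longrightarrow> 0 \<le> y \<Longrightarrow> a \<le> y * (D::real)"
  by (meson mult_left_mono order_trans)

context admm begin

abbreviation "Dk k \<equiv> iter_diff_norm N W WN V VN Lam k"

lemma D_parts:
  shows "i \<in> {1..N-1} \<Longrightarrow> norm (W k i - W (k-1) i) \<le> Dk k"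
    and "i \<in> {1..N-1} \<Longrightarrow> norm (V k i - V (k-1) i) \<le> Dk k"
    and "norm (WN k - WN (k-1)) \<le> Dk k" and "norm (VN k - VN (k-1)) \<le> Dk k"
    and "norm (Lam k - Lam (k-1)) \<le> Dk k" and "0 \<le> Dk k"
proof -
  let ?a = "\<Sum>i=1..N-1. (norm (W k i - W (k-1) i))\<^sup>2"
  let ?b = "\<Sum>i=1..N-1. (norm (V k i - V (k-1) i))\<^sup>2"
  have a: "0 \<le> ?a" and b: "0 \<le> ?b" by (auto intro!: sum_nonneg)
  have D: "Dk k = sqrt (?a + (norm (WN k - WN (k-1)))\<^sup>2 + ?b + (norm (VN k - VN (k-1)))\<^sup>2 + (norm (Lam k - Lam (k-1)))\<^sup>2)"
    by (simp add: iter_diff_norm_def)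
  note z = zero_le_power2[of "norm (WN k - WN (k-1))"] zero_le_power2[of "norm (VN k - VN (k-1))"]
     zero_le_power2[of "norm (Lam k - Lam (k-1))"]
  show "0 \<le> Dk k" unfolding D using a b z by (intro real_sqrt_ge_zero) linarith
  show "i \<in> {1..N-1} \<Longrightarrow> norm (W k i - W (k-1) i) \<le> Dk k"
  proof -
    assume i: "i \<in> {1..N-1}"
    have "(norm (W k i - W (k-1) i))\<^sup>2 \<le> ?a" by (rule member_le_sum) (use i in auto)
    then show ?thesis unfolding D using a b z by (intro real_le_rsqrt) linarith
  qed
  show "i \<in> {1..N-1} \<Longrightarrow> norm (V k i - V (k-1) i) \<le> Dk k"
  proof -
    assume i: "i \<in> {1..N-1}"
    have "(norm (V k i - V (k-1) i))\<^sup>2 \<le> ?b" by (rule member_le_sum) (use i in auto)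
    then show ?thesis unfolding D using a b z by (intro real_le_rsqrt) linarith
  qed
  show "norm (WN k - WN (k-1)) \<le> Dk k" unfolding D using a b z by (intro real_le_rsqrt) linarith
  show "norm (VN k - VN (k-1)) \<le> Dk k" unfolding D using a b z by (intro real_le_rsqrt) linarith
  show "norm (Lam k - Lam (k-1)) \<le> Dk k" unfolding D using a b z by (intro real_le_rsqrt) linarith
qed

lemma D_Vx: "j \<le> N - 1 \<Longrightarrow> norm (Vx X (V k) j - Vx X (V (k-1)) j) \<le> Dk k"
  using D_parts(2)[of j k] D_parts(6)[of k] by (cases "j = 0") (auto simp: Vx_def)

lemma bprod: "norm (A ** B) \<le> Bd * Dk k" if "norm A \<le> Bd" "norm B \<le> Dk k" for A :: "real^'a^'b" and B :: "real^'c^'a"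
  by (rule order_trans[OF norm_mult_le mult_mono]) (use that Bd in auto)

definition omM where "omM = (\<Sum>i=1..N-1. om_max i)"
definition nuM where "nuM = (\<Sum>i=1..N-2. nu_max i)"

lemma om_le: "i \<in> {1..N-1} \<Longrightarrow> 0 \<le> om i k \<and> om i k \<le> omM"
proof -
  assume i: "i \<in> {1..N-1}"
  have nn: "0 \<le> om_max j" if "j \<in> {1..N-1}" for j using omb that by (meson less_le_trans less_imp_le)
  have "om_max i \<le> omM" unfolding omM_def by (rule member_le_sum) (use i nn in auto)
  then show ?thesis using omb i by (meson less_le_trans less_imp_le order_trans)
qed

lemma nu_le: "i \<in> {1..N-2} \<Longrightarrow> 0 \<le> nu i k \<and> nu i k \<le> nuM"
proof -
  assume i: "i \<in> {1..N-2}"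
  have nn: "0 \<le> nu_max j" if "j \<in> {1..N-2}" for j using nub that by (meson less_le_trans less_imp_le)
  have "nu_max i \<le> nuM" unfolding nuM_def by (rule member_le_sum) (use i nn in auto)
  then show ?thesis using nub i by (meson less_le_trans less_imp_le order_trans)
qed

lemma omM: "omM \<ge> 0" using om_le[OF one_in] by (meson order_trans)
lemma nuM: "nuM \<ge> 0"
proof -
  have nn: "0 \<le> nu_max j" if "j \<in> {1..N-2}" for j using nub that by (meson less_le_trans less_imp_le)
  then show ?thesis unfolding nuM_def by (intro sum_nonneg) auto
qed

definition CW where "CW = mu * ((2 + psi1*Bd) * (psi1*Bd) + (2*Bd + K0) * (psi2*Bd*Bd + psi1)) + omM"

lemma CW: "CW \<ge> 0" unfolding CW_def using mu psi1 psi2 Bd K0 omM by simp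

lemma gW: assumes k: "k \<ge> 1" and i: "i \<in> {1..N-1}"
  shows "norm (grad_of (\<lambda>Z. L ((W k)(i := Z)) (WN k) (V k) (VN k) (Lam k)) (W k i)) \<le> CW * Dk k"
proof -
  let ?o = "k - 1"
  define s where "s = sig i"
  define A where "A = Vx X (V k) (i-1)"
  define Ao where "Ao = Vx X (V ?o) (i-1)"
  define Bv where "Bv = V k i"
  define Bo where "Bo = V ?o i"
  define Wc where "Wc = W k i"
  define Wo where "Wo = W ?o i"
  define om' where "om' = om i ?o"
  define D where "D = Dk k"
  have sd: "\<And>x. (s has_real_derivative deriv s x) (at x)" unfolding s_def using sig_d1[OF i] .
  define T where "T Z = lam/2 * (norm Z)\<^sup>2 + mu/2 * (norm (A + ew s (Z ** A) - Bv))\<^sup>2" for Z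
  define T' where "T' v = lam * inner Wc v + mu * inner (A + ew s (Wc ** A) - Bv) (dew s (Wc ** A) (v ** A))" for v
  have FT: "L ((W k)(i := Z)) (WN k) (V k) (VN k) (Lam k)
      = (L (W k) (WN k) (V k) (VN k) (Lam k) - (lam/2 * (norm (W k i))\<^sup>2 + mu/2 * (norm (res (sig i) (W k i) (Vx X (V k) (i-1)) (V k i)))\<^sup>2)) + T Z" for Z
    unfolding lagr_W[OF i] T_def res_def s_def A_def Bv_def by simp
  have dT: "(T has_derivative T') (at Wc)"
    unfolding T_def[abs_def] T'_def[abs_def]
    by (rule has_derivative_add[OF hq_deriv[OF has_derivative_ident] hq_deriv[OF resW_deriv[OF sd]]])
  define h where "h Z = lam/2 * (norm Z)\<^sup>2 + mu/2 * (norm (Ao + ew s (Z ** Ao) - Bo))\<^sup>2 + om'/2 * (norm (Z - Wo))\<^sup>2" for Z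
  define h' where "h' v = lam * inner Wc v + mu * inner (Ao + ew s (Wc ** Ao) - Bo) (dew s (Wc ** Ao) (v ** Ao))
     + om' * inner (Wc - Wo) (v - 0)" for v
  have dh: "(h has_derivative h') (at Wc)"
    unfolding h_def[abs_def] h'_def[abs_def]
    by (rule has_derivative_add[OF has_derivative_add[OF hq_deriv[OF has_derivative_ident] hq_deriv[OF resW_deriv[OF sd]]]
        hq_deriv[OF has_derivative_diff[OF has_derivative_ident has_derivative_const]]])
  have hmin: "h Wc \<le> h Z" for Z
    using stepB[OF k i, of Z] unfolding h_def s_def Ao_def Bo_def Wc_def Wo_def om'_def by simp
  have h0: "h' v = 0" for v by (rule min_deriv_zero[OF dh hmin])
  define R where "R = A + ew s (Wc ** A) - Bv"
  define Ro where "Ro = Ao + ew s (Wc ** Ao) - Bo"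
  define D1 where "D1 v = dew s (Wc ** A) (v ** A)" for v
  define D2 where "D2 v = dew s (Wc ** Ao) (v ** Ao)" for v
  have nA: "norm A \<le> Bd" "norm Ao \<le> Bd" unfolding A_def Ao_def using bndVx i by auto
  have nB: "norm Bo \<le> Bd" unfolding Bo_def using bnd(2)[OF i] .
  have nW: "norm Wc \<le> Bd" unfolding Wc_def using bnd(1)[OF i] .
  have dA: "norm (A - Ao) \<le> D" unfolding A_def Ao_def D_def using D_Vx i by auto
  have dB: "norm (Bv - Bo) \<le> D" unfolding Bv_def Bo_def D_def using D_parts(2)[OF i] .
  have dW: "norm (Wc - Wo) \<le> D" unfolding Wc_def Wo_def D_def using D_parts(1)[OF i] .
  have D0: "0 \<le> D" unfolding D_def using D_parts(6) .
  have p1: "\<And>x. \<bar>deriv s x\<bar> \<le> psi1" unfolding s_def using sb1 i by auto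
  have sl: "\<And>x y. \<bar>s x - s y\<bar> \<le> psi1 * \<bar>x - y\<bar>" unfolding s_def by (rule sig_lip[OF i])
  have dsl: "\<And>x y. \<bar>deriv s x - deriv s y\<bar> \<le> psi2 * \<bar>x - y\<bar>" unfolding s_def by (rule dsig_lip[OF i])
  have ewk: "norm (ew s M) \<le> K0" for M :: "real^'n^'d" unfolding s_def by (rule ewb[OF i])
  have nR: "norm (R - Ro) \<le> (2 + psi1*Bd) * D"
  proof -
    have "R - Ro = (A - Ao) + (ew s (Wc ** A) - ew s (Wc ** Ao)) - (Bv - Bo)"
      unfolding R_def Ro_def by (simp add: algebra_simps)
    then have "norm (R - Ro) \<le> norm (A - Ao) + norm (ew s (Wc ** A) - ew s (Wc ** Ao)) + norm (Bv - Bo)"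
      by (simp only: tri3)
    moreover have "norm (ew s (Wc ** A) - ew s (Wc ** Ao)) \<le> psi1 * (Bd * D)"
    proof -
      have "norm (ew s (Wc ** A) - ew s (Wc ** Ao)) \<le> psi1 * norm (Wc ** A - Wc ** Ao)"
        by (rule ew_lip[OF sl psi1])
      also have "Wc ** A - Wc ** Ao = Wc ** (A - Ao)" by (simp add: matrix_diff_ldistrib)
      also have "psi1 * norm (Wc ** (A - Ao)) \<le> psi1 * (Bd * D)"
        using bprod[OF nW dA[unfolded D_def]] psi1 unfolding D_def by (intro mult_left_mono) auto
      finally show ?thesis .
    qed
    ultimately show ?thesis using dA dB by (simp add: algebra_simps)
  qed
  have nD1: "norm (D1 v) \<le> psi1 * (norm v * Bd)" for v
  proof -
    have "norm (D1 v) \<le> psi1 * norm (v ** A)" unfolding D1_def by (rule dew_bound[OF p1])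
    also have "\<dots> \<le> psi1 * (norm v * Bd)"
    proof (rule mult_left_mono[OF _ psi1])
      show "norm (v ** A) \<le> norm v * Bd" using norm_mult_le[of v A] nA by (meson mult_left_mono norm_ge_zero order_trans)
    qed
    finally show ?thesis .
  qed
  have nD12: "norm (D1 v - D2 v) \<le> psi2 * (Bd * D) * (norm v * Bd) + psi1 * (norm v * D)" for v
  proof -
    have e: "D1 v - D2 v = (dew s (Wc ** A) (v ** A) - dew s (Wc ** Ao) (v ** A)) + dew s (Wc ** Ao) (v ** (A - Ao))"
      unfolding D1_def D2_def by (simp add: dew_diffH[symmetric] matrix_diff_ldistrib)
    have a: "norm (dew s (Wc ** A) (v ** A) - dew s (Wc ** Ao) (v ** A)) \<le> psi2 * (Bd * D) * (norm v * Bd)"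
    proof -
      have "norm (dew s (Wc ** A) (v ** A) - dew s (Wc ** Ao) (v ** A)) \<le> psi2 * norm (Wc ** A - Wc ** Ao) * norm (v ** A)"
        by (rule dew_lip[OF dsl psi2])
      also have "\<dots> \<le> psi2 * (Bd * D) * (norm v * Bd)"
      proof (intro mult_mono mult_left_mono)
        have "Wc ** A - Wc ** Ao = Wc ** (A - Ao)" by (simp add: matrix_diff_ldistrib)
        then show "norm (Wc ** A - Wc ** Ao) \<le> Bd * D" using bprod[OF nW dA[unfolded D_def]] unfolding D_def by simp
        show "norm (v ** A) \<le> norm v * Bd" using norm_mult_le[of v A] nA by (meson mult_left_mono norm_ge_zero order_trans)
      qed (use psi2 Bd D0 in auto)
      finally show ?thesis .
    qed
    have b: "norm (dew s (Wc ** Ao) (v ** (A - Ao))) \<le> psi1 * (norm v * D)"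
    proof -
      have "norm (dew s (Wc ** Ao) (v ** (A - Ao))) \<le> psi1 * norm (v ** (A - Ao))" by (rule dew_bound[OF p1])
      also have "\<dots> \<le> psi1 * (norm v * D)"
      proof (rule mult_left_mono[OF _ psi1])
        show "norm (v ** (A - Ao)) \<le> norm v * D"
          using norm_mult_le[of v "A - Ao"] dA by (meson mult_left_mono norm_ge_zero order_trans)
      qed
      finally show ?thesis .
    qed
    show ?thesis unfolding e using a b norm_triangle_ineq order_trans add_mono by (smt (verit))
  qed
  have nRo: "norm Ro \<le> 2*Bd + K0"
  proof -
    have "norm Ro \<le> norm Ao + norm (ew s (Wc ** Ao)) + norm Bo"
      unfolding Ro_def by (rule tri3)
    then show ?thesis using nA nB ewk[of "Wc ** Ao"] by simp
  qed
  have key: "T' v = mu * (inner (R - Ro) (D1 v) + inner Ro (D1 v - D2 v)) - om' * inner (Wc - Wo) v" for v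
  proof -
    have "T' v = T' v - h' v" using h0 by simp
    also have "\<dots> = mu * (inner (R - Ro) (D1 v) + inner Ro (D1 v - D2 v)) - om' * inner (Wc - Wo) v"
      unfolding T'_def h'_def R_def Ro_def D1_def D2_def by (simp add: inner_diff_left inner_diff_right algebra_simps)
    finally show ?thesis .
  qed
  have omb': "0 \<le> om'" "om' \<le> omM" unfolding om'_def using om_le[OF i] by auto
  have bound: "\<bar>T' v\<bar> \<le> CW * D * norm v" for v
  proof -
    have i1: "\<bar>inner (R - Ro) (D1 v)\<bar> \<le> ((2 + psi1*Bd) * D) * (psi1 * (norm v * Bd))"
      by (rule order_trans[OF abs_inner_le mult_mono[OF nR nD1]]) (use psi1 Bd D0 in auto)
    have i2: "\<bar>inner Ro (D1 v - D2 v)\<bar> \<le> (2*Bd + K0) * (psi2 * (Bd * D) * (norm v * Bd) + psi1 * (norm v * D))"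
      by (rule order_trans[OF abs_inner_le mult_mono[OF nRo nD12]]) (use Bd K0 in auto)
    have i3: "\<bar>om' * inner (Wc - Wo) v\<bar> \<le> omM * (D * norm v)"
    proof -
      have "\<bar>om' * inner (Wc - Wo) v\<bar> = om' * \<bar>inner (Wc - Wo) v\<bar>" using omb' by (simp add: abs_mult)
      also have "\<dots> \<le> omM * (D * norm v)"
        using chainR[OF abs_inner_le[of "Wc - Wo" v] dW] omb' D0
        by (intro mult_mono) auto
      finally show ?thesis .
    qed
    have "\<bar>T' v\<bar> \<le> mu * (\<bar>inner (R - Ro) (D1 v)\<bar> + \<bar>inner Ro (D1 v - D2 v)\<bar>) + \<bar>om' * inner (Wc - Wo) v\<bar>"
    proof -
      let ?x = "inner (R - Ro) (D1 v)" and ?y = "inner Ro (D1 v - D2 v)" and ?z = "om' * inner (Wc - Wo) v"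
      have "\<bar>T' v\<bar> \<le> \<bar>mu * (?x + ?y)\<bar> + \<bar>?z\<bar>" unfolding key by (rule abs_triangle_ineq4)
      also have "\<bar>mu * (?x + ?y)\<bar> = mu * \<bar>?x + ?y\<bar>" using mu by (simp add: abs_mult)
      also have "mu * \<bar>?x + ?y\<bar> \<le> mu * (\<bar>?x\<bar> + \<bar>?y\<bar>)" using mu by (intro mult_left_mono abs_triangle_ineq) auto
      finally show ?thesis by simp
    qed
    also have "\<dots> \<le> mu * (((2 + psi1*Bd) * D) * (psi1 * (norm v * Bd)) + (2*Bd + K0) * (psi2 * (Bd * D) * (norm v * Bd) + psi1 * (norm v * D)))
        + omM * (D * norm v)"
      using i1 i2 i3 mu by (intro add_mono mult_left_mono) auto
    also have "\<dots> = CW * D * norm v" unfolding CW_def by (simp add: algebra_simps)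
    finally show ?thesis .
  qed
  have "norm (grad_of (\<lambda>Z. L ((W k)(i := Z)) (WN k) (V k) (VN k) (Lam k)) Wc) \<le> CW * D"
    by (rule grad_via[OF FT dT]) (use CW D0 bound in auto)
  then show ?thesis unfolding Wc_def D_def .
qed

end


context admm begin

lemma mulb: "norm (A ** B) \<le> a * norm B" if "norm A \<le> a" for A :: "real^'a^'b" and B :: "real^'c^'a"
  using norm_mult_le[of A B] that by (meson mult_right_mono norm_ge_zero order_trans)
lemma mulb': "norm (A ** B) \<le> norm A * b" if "norm B \<le> b" for A :: "real^'a^'b" and B :: "real^'c^'a"
  using norm_mult_le[of A B] that by (meson mult_left_mono norm_ge_zero order_trans)

definition CWN where "CWN = (1 + beta*Bd + beta) * Bd + (beta*(Bd*Bd + Bd) + Bd)"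
lemma CWN: "CWN \<ge> 0" unfolding CWN_def using beta Bd by simp

lemma gWN: assumes k: "k \<ge> 1"
  shows "norm (grad_of (\<lambda>Z. L (W k) Z (V k) (VN k) (Lam k)) (WN k)) \<le> CWN * Dk k"
proof -
  let ?o = "k - 1"
  define P where "P = V k (N-1)"
  define Po where "Po = V ?o (N-1)"
  define Wn where "Wn = WN k"
  define D where "D = Dk k"
  have N1: "N - 1 \<in> {1..N-1}" using N3 by auto
  define T where "T Z = lam/2 * (norm Z)\<^sup>2 + inner (Lam k) (Z ** P - VN k) + beta/2 * (norm (Z ** P - VN k))\<^sup>2" for Z
  define T' where "T' v = lam * inner Wn v + inner (Lam k) (v ** P - 0) + beta * inner (Wn ** P - VN k) (v ** P - 0)" for v
  have FT: "L (W k) Z (V k) (VN k) (Lam k) = (L (W k) (WN k) (V k) (VN k) (Lam k)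
      - (lam/2 * (norm (WN k))\<^sup>2 + inner (Lam k) (WN k ** V k (N-1) - VN k) + beta/2 * (norm (WN k ** V k (N-1) - VN k))\<^sup>2)) + T Z" for Z
    unfolding lagr_WN[of X Y N lam mu beta sig "W k" Z "V k" "VN k" "Lam k" "WN k"] T_def P_def by simp
  have dg: "((\<lambda>Z. Z ** P - VN k) has_derivative (\<lambda>h. h ** P - 0)) (at Wn)"
    by (rule has_derivative_diff[OF bounded_linear_imp_has_derivative[OF bl_mult_right] has_derivative_const])
  have dT: "(T has_derivative T') (at Wn)"
    unfolding T_def[abs_def] T'_def[abs_def]
    by (rule has_derivative_add[OF has_derivative_add[OF hq_deriv[OF has_derivative_ident] inner_deriv[OF dg]] hq_deriv[OF dg]])
  define h where "h Z = lam/2 * (norm Z)\<^sup>2 + beta/2 * (norm (Z ** Po - VN ?o + (1/beta) *\<^sub>R Lam ?o))\<^sup>2" for Z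
  define h' where "h' v = lam * inner Wn v + beta * inner (Wn ** Po - VN ?o + (1/beta) *\<^sub>R Lam ?o) (v ** Po - 0 + 0)" for v
  have dgo: "((\<lambda>Z. Z ** Po - VN ?o + (1/beta) *\<^sub>R Lam ?o) has_derivative (\<lambda>h. h ** Po - 0 + 0)) (at Wn)"
    by (rule has_derivative_add[OF has_derivative_diff[OF bounded_linear_imp_has_derivative[OF bl_mult_right] has_derivative_const] has_derivative_const])
  have dh: "(h has_derivative h') (at Wn)"
    unfolding h_def[abs_def] h'_def[abs_def]
    by (rule has_derivative_add[OF hq_deriv[OF has_derivative_ident] hq_deriv[OF dgo]])
  have hmin: "h Wn \<le> h Z" for Z using stepA[OF k, of Z] unfolding h_def Wn_def Po_def by simp
  have h0: "h' v = 0" for v by (rule min_deriv_zero[OF dh hmin])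
  define E where "E = Lam k + beta *\<^sub>R (Wn ** P - VN k)"
  define Eo where "Eo = beta *\<^sub>R (Wn ** Po - VN ?o) + Lam ?o"
  have key: "T' v = inner (E - Eo) (v ** P) + inner Eo (v ** (P - Po))" for v
  proof -
    have "T' v = T' v - h' v" using h0 by simp
    also have "\<dots> = inner (E - Eo) (v ** P) + inner Eo (v ** (P - Po))"
      unfolding T'_def h'_def E_def Eo_def using beta0
      by (simp add: inner_diff_left inner_diff_right inner_add_left inner_add_right matrix_diff_ldistrib algebra_simps)
    finally show ?thesis .
  qed
  have D0: "0 \<le> D" unfolding D_def using D_parts(6) .
  have nP: "norm P \<le> Bd" "norm Po \<le> Bd" unfolding P_def Po_def using bnd(2)[OF N1] by auto
  have nWn: "norm Wn \<le> Bd" unfolding Wn_def using bnd(3) .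
  have dP: "norm (P - Po) \<le> D" unfolding P_def Po_def D_def using D_parts(2)[OF N1] .
  have nE: "norm (E - Eo) \<le> (1 + beta*Bd + beta) * D"
  proof -
    have "E - Eo = (Lam k - Lam ?o) + beta *\<^sub>R (Wn ** (P - Po)) - beta *\<^sub>R (VN k - VN ?o)"
      unfolding E_def Eo_def by (simp add: matrix_diff_ldistrib algebra_simps)
    then have "norm (E - Eo) \<le> norm (Lam k - Lam ?o) + norm (beta *\<^sub>R (Wn ** (P - Po))) + norm (beta *\<^sub>R (VN k - VN ?o))"
      by (simp only: tri3)
    also have "\<dots> \<le> D + beta * (Bd * D) + beta * D"
      using D_parts(5)[of k] D_parts(4)[of k] bprod[OF nWn dP[unfolded D_def]] beta0
      unfolding D_def by (intro add_mono) (auto intro: mult_left_mono)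
    finally show ?thesis by (simp add: algebra_simps)
  qed
  have nEo: "norm Eo \<le> beta*(Bd*Bd + Bd) + Bd"
  proof -
    have "norm Eo \<le> norm (beta *\<^sub>R (Wn ** Po - VN ?o)) + norm (Lam ?o)" unfolding Eo_def by (rule norm_triangle_ineq)
    also have "norm (beta *\<^sub>R (Wn ** Po - VN ?o)) = beta * norm (Wn ** Po - VN ?o)" using beta0 by simp
    also have "norm (Wn ** Po - VN ?o) \<le> Bd*Bd + Bd"
      using norm_triangle_ineq4[of "Wn ** Po" "VN ?o"] mulb[OF nWn, of Po] nP(2) bnd(4)[of ?o] Bd
      by (smt (verit) mult_left_mono)
    finally show ?thesis using bnd(5)[of ?o] beta0 by (smt (verit) mult_left_mono)
  qed
  have bound: "\<bar>T' v\<bar> \<le> CWN * D * norm v" for v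
  proof -
    have i1: "\<bar>inner (E - Eo) (v ** P)\<bar> \<le> ((1 + beta*Bd + beta) * D) * (norm v * Bd)"
      by (rule order_trans[OF abs_inner_le mult_mono[OF nE mulb'[OF nP(1)]]]) (use beta Bd D0 in auto)
    have i2: "\<bar>inner Eo (v ** (P - Po))\<bar> \<le> (beta*(Bd*Bd + Bd) + Bd) * (norm v * D)"
      by (rule order_trans[OF abs_inner_le mult_mono[OF nEo mulb'[OF dP]]]) (use beta Bd D0 in auto)
    have "\<bar>T' v\<bar> \<le> \<bar>inner (E - Eo) (v ** P)\<bar> + \<bar>inner Eo (v ** (P - Po))\<bar>" unfolding key by (rule abs_triangle_ineq)
    also have "\<dots> \<le> ((1 + beta*Bd + beta) * D) * (norm v * Bd) + (beta*(Bd*Bd + Bd) + Bd) * (norm v * D)"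
      using i1 i2 by (rule add_mono)
    also have "\<dots> = CWN * D * norm v" unfolding CWN_def by (simp add: algebra_simps)
    finally show ?thesis .
  qed
  have "norm (grad_of (\<lambda>Z. L (W k) Z (V k) (VN k) (Lam k)) Wn) \<le> CWN * D"
    by (rule grad_via[OF FT dT]) (use CWN D0 bound in auto)
  then show ?thesis unfolding Wn_def D_def .
qed

end


context admm begin

definition CV where "CV = mu * (1 + psi1*Bd) + nuM"
lemma CV: "CV \<ge> 0" unfolding CV_def using mu psi1 Bd nuM by simp

lemma gV: assumes k: "k \<ge> 1" and i: "i \<in> {1..N-2}"
  shows "norm (grad_of (\<lambda>Z. L (W k) (WN k) ((V k)(i := Z)) (VN k) (Lam k)) (V k i)) \<le> CV * Dk k"
proof -
  let ?o = "k - 1"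
  have i1: "i \<in> {1..N-1}" and i2: "i + 1 \<in> {1..N-1}" using i by auto
  define A where "A = Vx X (V k) (i-1)"
  define W1 where "W1 = W k i"
  define W2 where "W2 = W k (i+1)"
  define Vi where "Vi = V k i"
  define B2 where "B2 = V k (i+1)"
  define Bo2 where "Bo2 = V ?o (i+1)"
  define s1 where "s1 = sig i"
  define s2 where "s2 = sig (i+1)"
  define nu' where "nu' = nu i ?o"
  define D where "D = Dk k"
  have sd2: "\<And>x. (s2 has_real_derivative deriv s2 x) (at x)" unfolding s2_def using sig_d1[OF i2] .
  define T where "T Z = mu/2 * (norm (A + ew s1 (W1 ** A) - Z))\<^sup>2 + mu/2 * (norm (Z + ew s2 (W2 ** Z) - B2))\<^sup>2" for Z
  define T' where "T' v = mu * inner (A + ew s1 (W1 ** A) - Vi) (0 - v) + mu * inner (Vi + ew s2 (W2 ** Vi) - B2) (v + dew s2 (W2 ** Vi) (W2 ** v))" for v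
  have FT: "L (W k) (WN k) ((V k)(i := Z)) (VN k) (Lam k) = (L (W k) (WN k) (V k) (VN k) (Lam k)
     - mu/2 * ((norm (res (sig i) (W k i) (Vx X (V k) (i-1)) (V k i)))\<^sup>2 + (norm (res (sig (i+1)) (W k (i+1)) (V k i) (V k (i+1))))\<^sup>2)) + T Z" for Z
    unfolding lagr_V[OF i] T_def res_def A_def W1_def W2_def B2_def s1_def s2_def by (simp add: algebra_simps)
  have d1: "((\<lambda>Z. A + ew s1 (W1 ** A) - Z) has_derivative (\<lambda>h. 0 - h)) (at Vi)"
    by (rule has_derivative_diff[OF has_derivative_const has_derivative_ident])
  have dT: "(T has_derivative T') (at Vi)"
    unfolding T_def[abs_def] T'_def[abs_def]
    by (rule has_derivative_add[OF hq_deriv[OF d1] hq_deriv[OF resV_deriv[OF sd2]]])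
  define h where "h Z = mu/2 * (norm (A + ew s1 (W1 ** A) - Z))\<^sup>2 + mu/2 * (norm (Z + ew s2 (W2 ** Z) - Bo2))\<^sup>2
      + nu'/2 * (norm (Z - V ?o i))\<^sup>2" for Z
  define h' where "h' v = mu * inner (A + ew s1 (W1 ** A) - Vi) (0 - v) + mu * inner (Vi + ew s2 (W2 ** Vi) - Bo2) (v + dew s2 (W2 ** Vi) (W2 ** v))
      + nu' * inner (Vi - V ?o i) (v - 0)" for v
  have dh: "(h has_derivative h') (at Vi)"
    unfolding h_def[abs_def] h'_def[abs_def]
    by (rule has_derivative_add[OF has_derivative_add[OF hq_deriv[OF d1] hq_deriv[OF resV_deriv[OF sd2]]]
        hq_deriv[OF has_derivative_diff[OF has_derivative_ident has_derivative_const]]])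
  have hmin: "h Vi \<le> h Z" for Z
    using stepC[OF k i, of Z] unfolding h_def A_def W1_def W2_def Vi_def Bo2_def s1_def s2_def nu'_def by simp
  have h0: "h' v = 0" for v by (rule min_deriv_zero[OF dh hmin])
  have key: "T' v = mu * inner (Bo2 - B2) (v + dew s2 (W2 ** Vi) (W2 ** v)) - nu' * inner (Vi - V ?o i) v" for v
  proof -
    have "T' v = T' v - h' v" using h0 by simp
    also have "\<dots> = mu * inner (Bo2 - B2) (v + dew s2 (W2 ** Vi) (W2 ** v)) - nu' * inner (Vi - V ?o i) v"
      unfolding T'_def h'_def by (simp add: inner_diff_left algebra_simps)
    finally show ?thesis .
  qed
  have D0: "0 \<le> D" unfolding D_def using D_parts(6) .
  have p1: "\<And>x. \<bar>deriv s2 x\<bar> \<le> psi1" unfolding s2_def using sb1 i2 by auto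
  have nW2: "norm W2 \<le> Bd" unfolding W2_def using bnd(1)[OF i2] .
  have dB: "norm (Bo2 - B2) \<le> D" unfolding Bo2_def B2_def D_def using D_parts(2)[OF i2] by (simp add: norm_minus_commute)
  have dV: "norm (Vi - V ?o i) \<le> D" unfolding Vi_def D_def using D_parts(2)[OF i1] .
  have nuo: "0 \<le> nu'" "nu' \<le> nuM" unfolding nu'_def using nu_le[OF i] by auto
  have nvD: "norm (v + dew s2 (W2 ** Vi) (W2 ** v)) \<le> (1 + psi1*Bd) * norm v" for v
  proof -
    have "norm (dew s2 (W2 ** Vi) (W2 ** v)) \<le> psi1 * norm (W2 ** v)" by (rule dew_bound[OF p1])
    also have "\<dots> \<le> psi1 * (Bd * norm v)" using mulb[OF nW2, of v] psi1 by (rule mult_left_mono)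
    finally show ?thesis using norm_triangle_ineq[of v "dew s2 (W2 ** Vi) (W2 ** v)"] by (simp add: algebra_simps)
  qed
  have bound: "\<bar>T' v\<bar> \<le> CV * D * norm v" for v
  proof -
    have j1: "\<bar>inner (Bo2 - B2) (v + dew s2 (W2 ** Vi) (W2 ** v))\<bar> \<le> D * ((1 + psi1*Bd) * norm v)"
      by (rule order_trans[OF abs_inner_le mult_mono[OF dB nvD]]) (use D0 in auto)
    have j2: "\<bar>nu' * inner (Vi - V ?o i) v\<bar> \<le> nuM * (D * norm v)"
    proof -
      have "\<bar>nu' * inner (Vi - V ?o i) v\<bar> = nu' * \<bar>inner (Vi - V ?o i) v\<bar>" using nuo by (simp add: abs_mult)
      also have "\<dots> \<le> nuM * (D * norm v)"
        using chainR[OF abs_inner_le[of "Vi - V ?o i" v] dV] nuo D0 by (intro mult_mono) auto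
      finally show ?thesis .
    qed
    have "\<bar>T' v\<bar> \<le> \<bar>mu * inner (Bo2 - B2) (v + dew s2 (W2 ** Vi) (W2 ** v))\<bar> + \<bar>nu' * inner (Vi - V ?o i) v\<bar>"
      unfolding key by (rule abs_triangle_ineq4)
    also have "\<bar>mu * inner (Bo2 - B2) (v + dew s2 (W2 ** Vi) (W2 ** v))\<bar> = mu * \<bar>inner (Bo2 - B2) (v + dew s2 (W2 ** Vi) (W2 ** v))\<bar>"
      using mu by (simp add: abs_mult)
    also have "mu * \<bar>inner (Bo2 - B2) (v + dew s2 (W2 ** Vi) (W2 ** v))\<bar> + \<bar>nu' * inner (Vi - V ?o i) v\<bar>
        \<le> mu * (D * ((1 + psi1*Bd) * norm v)) + nuM * (D * norm v)"
      using j1 j2 mu by (intro add_mono mult_left_mono) auto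
    also have "\<dots> = CV * D * norm v" unfolding CV_def by (simp add: algebra_simps)
    finally show ?thesis .
  qed
  have "norm (grad_of (\<lambda>Z. L (W k) (WN k) ((V k)(i := Z)) (VN k) (Lam k)) Vi) \<le> CV * D"
    by (rule grad_via[OF FT dT]) (use CV D0 bound in auto)
  then show ?thesis unfolding Vi_def D_def .
qed

definition CVL where "CVL = (1 + beta) * Bd"
lemma CVL: "CVL \<ge> 0" unfolding CVL_def using beta Bd by simp

lemma gVL: assumes k: "k \<ge> 1"
  shows "norm (grad_of (\<lambda>Z. L (W k) (WN k) ((V k)(N-1 := Z)) (VN k) (Lam k)) (V k (N-1))) \<le> CVL * Dk k"
proof -
  let ?o = "k - 1"
  have N1: "N - 1 \<in> {1..N-1}" using N3 by auto
  define A where "A = Vx X (V k) (N-2)"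
  define W1 where "W1 = W k (N-1)"
  define s where "s = sig (N-1)"
  define Vl where "Vl = V k (N-1)"
  define Wn where "Wn = WN k"
  define D where "D = Dk k"
  define T where "T Z = mu/2 * (norm (A + ew s (W1 ** A) - Z))\<^sup>2 + inner (Lam k) (Wn ** Z - VN k) + beta/2 * (norm (Wn ** Z - VN k))\<^sup>2" for Z
  define T' where "T' v = mu * inner (A + ew s (W1 ** A) - Vl) (0 - v) + inner (Lam k) (Wn ** v - 0) + beta * inner (Wn ** Vl - VN k) (Wn ** v - 0)" for v
  have FT: "L (W k) (WN k) ((V k)(N-1 := Z)) (VN k) (Lam k) = (L (W k) (WN k) (V k) (VN k) (Lam k)
     - (mu/2 * (norm (res (sig (N-1)) (W k (N-1)) (Vx X (V k) (N-2)) (V k (N-1))))\<^sup>2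
        + inner (Lam k) (WN k ** V k (N-1) - VN k) + beta/2 * (norm (WN k ** V k (N-1) - VN k))\<^sup>2)) + T Z" for Z
    unfolding lagr_VL[OF N3] T_def res_def A_def W1_def s_def Wn_def by simp
  have d1: "((\<lambda>Z. A + ew s (W1 ** A) - Z) has_derivative (\<lambda>h. 0 - h)) (at Vl)"
    by (rule has_derivative_diff[OF has_derivative_const has_derivative_ident])
  have dg: "((\<lambda>Z. Wn ** Z - VN k) has_derivative (\<lambda>h. Wn ** h - 0)) (at Vl)"
    by (rule has_derivative_diff[OF bounded_linear_imp_has_derivative[OF bl_mult_left] has_derivative_const])
  have dT: "(T has_derivative T') (at Vl)"
    unfolding T_def[abs_def] T'_def[abs_def]
    by (rule has_derivative_add[OF has_derivative_add[OF hq_deriv[OF d1] inner_deriv[OF dg]] hq_deriv[OF dg]])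
  define h where "h Z = mu/2 * (norm (A + ew s (W1 ** A) - Z))\<^sup>2 + beta/2 * (norm (Wn ** Z - VN ?o + (1/beta) *\<^sub>R Lam ?o))\<^sup>2" for Z
  define h' where "h' v = mu * inner (A + ew s (W1 ** A) - Vl) (0 - v) + beta * inner (Wn ** Vl - VN ?o + (1/beta) *\<^sub>R Lam ?o) (Wn ** v - 0 + 0)" for v
  have dgo: "((\<lambda>Z. Wn ** Z - VN ?o + (1/beta) *\<^sub>R Lam ?o) has_derivative (\<lambda>h. Wn ** h - 0 + 0)) (at Vl)"
    by (rule has_derivative_add[OF has_derivative_diff[OF bounded_linear_imp_has_derivative[OF bl_mult_left] has_derivative_const] has_derivative_const])
  have dh: "(h has_derivative h') (at Vl)"
    unfolding h_def[abs_def] h'_def[abs_def]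
    by (rule has_derivative_add[OF hq_deriv[OF d1] hq_deriv[OF dgo]])
  have hmin: "h Vl \<le> h Z" for Z
    using stepD[OF k, of Z] unfolding h_def A_def W1_def s_def Vl_def Wn_def by simp
  have h0: "h' v = 0" for v by (rule min_deriv_zero[OF dh hmin])
  have key: "T' v = inner ((Lam k - Lam ?o) - beta *\<^sub>R (VN k - VN ?o)) (Wn ** v)" for v
  proof -
    have "T' v = T' v - h' v" using h0 by simp
    also have "\<dots> = inner ((Lam k - Lam ?o) - beta *\<^sub>R (VN k - VN ?o)) (Wn ** v)"
      unfolding T'_def h'_def using beta0
      by (simp add: inner_diff_left inner_diff_right inner_add_left inner_add_right algebra_simps)
    finally show ?thesis .
  qed
  have D0: "0 \<le> D" unfolding D_def using D_parts(6) .
  have nWn: "norm Wn \<le> Bd" unfolding Wn_def using bnd(3) .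
  have nd: "norm ((Lam k - Lam ?o) - beta *\<^sub>R (VN k - VN ?o)) \<le> (1 + beta) * D"
  proof -
    have "norm ((Lam k - Lam ?o) - beta *\<^sub>R (VN k - VN ?o)) \<le> norm (Lam k - Lam ?o) + beta * norm (VN k - VN ?o)"
      using norm_triangle_ineq4[of "Lam k - Lam ?o" "beta *\<^sub>R (VN k - VN ?o)"] beta0 by simp
    also have "\<dots> \<le> D + beta * D" using D_parts(5)[of k] D_parts(4)[of k] beta0 unfolding D_def
      by (intro add_mono mult_left_mono) auto
    finally show ?thesis by (simp add: algebra_simps)
  qed
  have bound: "\<bar>T' v\<bar> \<le> CVL * D * norm v" for v
  proof -
    have "\<bar>T' v\<bar> \<le> ((1 + beta) * D) * (Bd * norm v)"
      unfolding key by (rule order_trans[OF abs_inner_le mult_mono[OF nd mulb[OF nWn]]]) (use beta D0 in auto)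
    also have "\<dots> = CVL * D * norm v" unfolding CVL_def by (simp add: algebra_simps)
    finally show ?thesis .
  qed
  have "norm (grad_of (\<lambda>Z. L (W k) (WN k) ((V k)(N-1 := Z)) (VN k) (Lam k)) Vl) \<le> CVL * D"
    by (rule grad_via[OF FT dT]) (use CVL D0 bound in auto)
  then show ?thesis unfolding Vl_def D_def .
qed

lemma gVN: assumes k: "k \<ge> 1"
  shows "norm (grad_of (\<lambda>Z. L (W k) (WN k) (V k) Z (Lam k)) (VN k)) \<le> 1 * Dk k"
proof -
  define P where "P = WN k ** V k (N-1)"
  define Vn where "Vn = VN k"
  define D where "D = Dk k"
  define T where "T Z = 1/2 * (norm (Z - Y))\<^sup>2 + inner (Lam k) (P - Z) + beta/2 * (norm (P - Z))\<^sup>2" for Z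
  define T' where "T' v = 1 * inner (Vn - Y) (v - 0) + inner (Lam k) (0 - v) + beta * inner (P - Vn) (0 - v)" for v
  have FT: "L (W k) (WN k) (V k) Z (Lam k) = (L (W k) (WN k) (V k) (VN k) (Lam k)
     - (1/2 * (norm (VN k - Y))\<^sup>2 + inner (Lam k) (WN k ** V k (N-1) - VN k) + beta/2 * (norm (WN k ** V k (N-1) - VN k))\<^sup>2)) + T Z" for Z
    unfolding lagr_VN[of X Y N lam mu beta sig "W k" "WN k" "V k" Z "Lam k" "VN k"] T_def P_def by simp
  have d1: "((\<lambda>Z. Z - Y) has_derivative (\<lambda>h. h - 0)) (at Vn)"
    by (rule has_derivative_diff[OF has_derivative_ident has_derivative_const])
  have d2: "((\<lambda>Z. P - Z) has_derivative (\<lambda>h. 0 - h)) (at Vn)"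
    by (rule has_derivative_diff[OF has_derivative_const has_derivative_ident])
  have dT: "(T has_derivative T') (at Vn)"
    unfolding T_def[abs_def] T'_def[abs_def]
    by (rule has_derivative_add[OF has_derivative_add[OF hq_deriv[OF d1] inner_deriv[OF d2]] hq_deriv[OF d2]])
  have key: "T' v = - inner (Lam k - Lam (k-1)) v" for v
  proof -
    have e2: "P - Vn = (1/beta) *\<^sub>R (Lam k - Lam (k-1))" unfolding P_def Vn_def by (rule eLam[OF k])
    have e1: "Vn - Y = Lam k" using LamVN[OF k] by (simp add: Vn_def)
    show ?thesis unfolding T'_def e1 e2 using beta0 by (simp add: inner_diff_right)
  qed
  have D0: "0 \<le> D" unfolding D_def using D_parts(6) .
  have bound: "\<bar>T' v\<bar> \<le> 1 * D * norm v" for v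
    unfolding key using chainR[OF abs_inner_le[of "Lam k - Lam (k-1)" v] D_parts(5)[of k]] unfolding D_def by simp
  have "norm (grad_of (\<lambda>Z. L (W k) (WN k) (V k) Z (Lam k)) Vn) \<le> 1 * D"
    by (rule grad_via[OF FT dT]) (use D0 bound in auto)
  then show ?thesis unfolding Vn_def D_def .
qed

lemma gLam: assumes k: "k \<ge> 1"
  shows "norm (grad_of (\<lambda>Z. L (W k) (WN k) (V k) (VN k) Z) (Lam k)) \<le> 1 * Dk k"
proof -
  define e where "e = WN k ** V k (N-1) - VN k"
  define D where "D = Dk k"
  have FT: "L (W k) (WN k) (V k) (VN k) Z = (L (W k) (WN k) (V k) (VN k) (Lam k) - inner (Lam k) e) + inner Z e" for Z
    unfolding e_def lagr_Lam[of X Y N lam mu beta sig "W k" "WN k" "V k" "VN k" Z "Lam k"] by simp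
  have dT: "((\<lambda>Z. inner Z e) has_derivative (\<lambda>h. inner h e)) (at (Lam k))"
    by (rule bounded_linear_imp_has_derivative[OF bounded_linear_inner_left])
  have D0: "0 \<le> D" unfolding D_def using D_parts(6) .
  have ne: "norm e \<le> D"
  proof -
    have "norm e = norm (Lam k - Lam (k-1)) / beta" unfolding e_def eLam[OF k] using beta0 by simp
    also have "\<dots> \<le> norm (Lam k - Lam (k-1))" using beta by (simp add: divide_le_eq mult_le_cancel_left1)
    finally show ?thesis using D_parts(5)[of k] unfolding D_def by simp
  qed
  have bound: "\<bar>inner h e\<bar> \<le> 1 * D * norm h" for h
    using chainL[OF abs_inner_le[of h e] ne] by (simp add: mult.commute)
  have "norm (grad_of (\<lambda>Z. L (W k) (WN k) (V k) (VN k) Z) (Lam k)) \<le> 1 * D"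
    by (rule grad_via[OF FT dT]) (use D0 bound in auto)
  then show ?thesis unfolding D_def .
qed

end


context admm begin

definition CC where "CC = CW + CWN + CV + CVL + 1"

lemma main: "\<exists>C2>0. \<forall>k\<ge>1.
           lagr_grad_norm X Y N lam mu beta sig (W k) (WN k) (V k) (VN k) (Lam k)
             \<le> C2 * iter_diff_norm N W WN V VN Lam k"
proof (intro exI conjI allI impI)
  have C1: "CC \<ge> 1" unfolding CC_def using CW CWN CV CVL by simp
  show "real (2*N+1) * CC > 0" using C1 by simp
  fix k :: nat assume k: "k \<ge> 1"
  let ?D = "Dk k"
  have D0: "0 \<le> ?D" using D_parts(6) .
  have sq: "x\<^sup>2 \<le> (CC * ?D)\<^sup>2" if "x \<le> c * ?D" "c \<le> CC" "0 \<le> x" for x c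
  proof -
    have "x \<le> CC * ?D" using that D0 by (meson mult_right_mono order_trans)
    then show ?thesis using that(3) by (rule power_mono)
  qed
  let ?gW = "\<lambda>i. (norm (grad_of (\<lambda>Z. L ((W k)(i := Z)) (WN k) (V k) (VN k) (Lam k)) (W k i)))\<^sup>2"
  let ?gV = "\<lambda>i. (norm (grad_of (\<lambda>Z. L (W k) (WN k) ((V k)(i := Z)) (VN k) (Lam k)) (V k i)))\<^sup>2"
  let ?gWN = "(norm (grad_of (\<lambda>Z. L (W k) Z (V k) (VN k) (Lam k)) (WN k)))\<^sup>2"
  let ?gVN = "(norm (grad_of (\<lambda>Z. L (W k) (WN k) (V k) Z (Lam k)) (VN k)))\<^sup>2"
  let ?gL = "(norm (grad_of (\<lambda>Z. L (W k) (WN k) (V k) (VN k) Z) (Lam k)))\<^sup>2"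
  let ?M = "(CC * ?D)\<^sup>2"
  have cW: "CW \<le> CC" "CWN \<le> CC" "CV \<le> CC" "CVL \<le> CC" "1 \<le> CC"
    unfolding CC_def using CW CWN CV CVL by auto
  have sW: "sum ?gW {1..N-1} \<le> real (N-1) * ?M"
    using sum_bounded_above[of "{1..N-1}" ?gW ?M] sq[OF gW[OF k] cW(1)] by simp
  have sV: "sum ?gV {1..N-1} \<le> real (N-1) * ?M"
  proof -
    have "?gV i \<le> ?M" if i: "i \<in> {1..N-1}" for i
    proof (cases "i \<le> N - 2")
      case True
      then have "i \<in> {1..N-2}" using i by auto
      then show ?thesis using sq[OF gV[OF k] cW(3)] by simp
    next
      case False
      then have "i = N - 1" using i by auto
      then show ?thesis using sq[OF gVL[OF k] cW(4)] by simp
    qed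
    then show ?thesis using sum_bounded_above[of "{1..N-1}" ?gV ?M] by simp
  qed
  have sWN: "?gWN \<le> ?M" using sq[OF gWN[OF k] cW(2)] by simp
  have sVN: "?gVN \<le> ?M" using sq[OF gVN[OF k] cW(5)] by simp
  have sL: "?gL \<le> ?M" using sq[OF gLam[OF k] cW(5)] by simp
  have S: "sum ?gW {1..N-1} + ?gWN + sum ?gV {1..N-1} + ?gVN + ?gL \<le> real (2*N+1) * ?M"
  proof -
    have "sum ?gW {1..N-1} + ?gWN + sum ?gV {1..N-1} + ?gVN + ?gL \<le> real (N-1) * ?M + ?M + real (N-1) * ?M + ?M + ?M"
      using sW sV sWN sVN sL by linarith
    also have "\<dots> \<le> real (2*N+1) * ?M"
    proof -
      have "real (N-1) * ?M + ?M + real (N-1) * ?M + ?M + ?M = (2 * real (N-1) + 3) * ?M" by (simp add: algebra_simps)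
      also have "\<dots> \<le> real (2*N+1) * ?M" using N3 by (intro mult_right_mono) (auto simp: of_nat_diff)
      finally show ?thesis .
    qed
    finally show ?thesis .
  qed
  have M1: "real (2*N+1) * ?M \<le> (real (2*N+1) * CC * ?D)\<^sup>2"
  proof -
    have "real (2*N+1) \<le> (real (2*N+1))\<^sup>2" by (simp add: power2_eq_square)
    then have "real (2*N+1) * ?M \<le> (real (2*N+1))\<^sup>2 * ?M" by (intro mult_right_mono) auto
    also have "\<dots> = (real (2*N+1) * CC * ?D)\<^sup>2" by (simp add: power_mult_distrib)
    finally show ?thesis .
  qed
  have "lagr_grad_norm X Y N lam mu beta sig (W k) (WN k) (V k) (VN k) (Lam k)
      = sqrt (sum ?gW {1..N-1} + ?gWN + sum ?gV {1..N-1} + ?gVN + ?gL)"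
    by (simp add: lagr_grad_norm_def)
  also have "\<dots> \<le> sqrt ((real (2*N+1) * CC * ?D)\<^sup>2)" using S M1 by (intro real_sqrt_le_mono) linarith
  also have "\<dots> = real (2*N+1) * CC * ?D" using C1 D0 by simp
  finally show "lagr_grad_norm X Y N lam mu beta sig (W k) (WN k) (V k) (VN k) (Lam k)
             \<le> real (2*N+1) * CC * iter_diff_norm N W WN V VN Lam k" .
qed

end

theorem mainTheorem7:
  fixes X :: "real^'n^'d" and Y :: "real^'n^'q"
    and N :: nat and lam mu beta psi0 psi1 psi2 :: real
    and sig :: "nat \<Rightarrow> real \<Rightarrow> real"
    and om nu :: "nat \<Rightarrow> nat \<Rightarrow> real"
    and om_min om_max nu_min nu_max :: "nat \<Rightarrow> real"
    and W :: "nat \<Rightarrow> nat \<Rightarrow> real^'d^'d" and WN :: "nat \<Rightarrow> real^'d^'q"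
    and V :: "nat \<Rightarrow> nat \<Rightarrow> real^'n^'d" and VN Lam :: "nat \<Rightarrow> real^'n^'q"
  assumes "N \<ge> 3" and "lam > 0" and "mu > 0" and "beta > 1"
    and "\<forall>i\<in>{1..N-1}. real_analytic (sig i)"
    and "\<forall>i\<in>{1..N-1}. \<forall>x. \<bar>sig i x\<bar> \<le> psi0"
    and "\<forall>i\<in>{1..N-1}. \<forall>x. \<bar>deriv (sig i) x\<bar> \<le> psi1"
    and "\<forall>i\<in>{1..N-1}. \<forall>x. \<bar>deriv (deriv (sig i)) x\<bar> \<le> psi2"
    and "\<forall>i\<in>{1..N-1}. \<forall>k. 0 < om_min i \<and> om_min i \<le> om i k \<and> om i k \<le> om_max i"
    and "\<forall>i\<in>{1..N-2}. \<forall>k. 0 < nu_min i \<and> nu_min i \<le> nu i k \<and> nu i k \<le> nu_max i"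
    and "admm2s_iterates X Y N lam mu beta sig om nu W WN V VN Lam"
  shows "\<exists>C2>0. \<forall>k\<ge>1.
           lagr_grad_norm X Y N lam mu beta sig (W k) (WN k) (V k) (VN k) (Lam k)
             \<le> C2 * iter_diff_norm N W WN V VN Lam k"
proof -
  interpret A: admm X Y N lam mu beta psi0 psi1 psi2 sig om nu om_min om_max nu_min nu_max W WN V VN Lam
    using assms by unfold_locales
  show ?thesis by (rule A.main)
qed


end
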